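(* Let $\rho$ satisfy (A1) and let $a>0$, $b>0$ satisfy $a,b\notin\Lambda(L)$, $\rho_1<a<b^+-b$ and $(a,b)\cap\Lambda(L)\neq\emptyset$. Then there exist $\gamma_1,\gamma_2>0$ such that $$\langle(L-a-b)u,u\rangle\le-\gamma_1\|u\|_E^2\quad\forall u\in E_1\oplus E_2,\qquad \langle(L-a-b)u,u\rangle\ge\gamma_2\|u\|_E^2\quad\forall u\in E_3.$$
   Context: $T=2\pi p/q$ ($p,q$ coprime positive integers), $\Omega=(0,T)\times(0,\pi)$, $L^2(\Omega)$ weighted by $\rho$. (A1): $\rho\in H^2(0,\pi)$, $\rho>0$ on $[0,\pi]$, $\rho_0:=\operatorname{ess\,inf}\eta_\rho>0$ with $\eta_\rho=\frac12\rho''/\rho-\frac14(\rho'/\rho)^2$; $\rho_1=\frac2\pi\int_0^\pi\eta_\rho$. $L$ is the self-adjoint extension in $L^2(\Omega)$ of $\rho^{-1}(\rho\psi_{tt}-(\rho\psi_x)_x)$ (Dirichlet in $x$, $T$-periodic in $t$), with orthonormal eigenbasis $\phi_m(t)\varphi_n(x)$, $\phi_m=T^{-1/2}e^{i2m\pi t/T}$, $\varphi_n$ the Dirichlet eigenfunctions of $-(\rho\varphi')'=\lambda_n^2\rho\varphi$, eigenvalues $\lambda_{nm}=\lambda_n^2-(2m\pi/T)^2$, $\Lambda(L)=\{\lambda_{nm}\}$; $b^+=\min\{\lambda\in\Lambda(L):\lambda>b\}$. For $u\in L^2(\Omega)$ let $\alpha_{nm}=\int_\Omega u\varphi_n\bar\phi_m\rho$.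 $E=\{u:\|u\|_E^2=\sum|\lambda_{nm}-a||\alpha_{nm}|^2<\infty\}$; $\langle(L-a-b)u,u\rangle=\sum(\lambda_{nm}-a-b)|\alpha_{nm}|^2$. $E_1,E_2,E_3$ are the closed subspaces of $E$ spanned by the $\phi_m\varphi_n$ with $\lambda_{nm}<a$, $a<\lambda_{nm}<b$, $\lambda_{nm}>b$ respectively. *)

theory Defs
  imports "HOL-Analysis.Analysis"
begin

definition Tper :: "nat \<Rightarrow> nat \<Rightarrow> real" where
  "Tper p q = 2 * pi * real p / real q"

definition Omega :: "real \<Rightarrow> (real \<times> real) set" where
  "Omega T = {0<..<T} \<times> {0<..<pi}"

(* phi is a (nonzero, real) Dirichlet eigenfunction of  -(rho phi')' = mu rho phi  on [0,pi],
   mu = lambda^2 being the spectral parameter. *)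
definition sl_eigenfun :: "(real \<Rightarrow> real) \<Rightarrow> real \<Rightarrow> (real \<Rightarrow> real) \<Rightarrow> bool" where
  "sl_eigenfun rho mu phi \<longleftrightarrow>
     (\<exists>phi'. \<forall>x\<in>{0..pi}.
        (phi has_real_derivative phi' x) (at x within {0..pi}) \<and>
        ((\<lambda>y. rho y * phi' y) has_real_derivative (- mu * rho x * phi x)) (at x within {0..pi}))
     \<and> phi 0 = 0 \<and> phi pi = 0 \<and> (\<exists>x\<in>{0..pi}. phi x \<noteq> 0)"

definition sl_spec :: "(real \<Rightarrow> real) \<Rightarrow> real set" where
  "sl_spec rho = {mu. \<exists>phi. sl_eigenfun rho mu phi}"

(* lambda_n^2, n >= 1: the n-th smallest Dirichlet eigenvalue *)
definition sl_eig :: "(real \<Rightarrow> real) \<Rightarrow> nat \<Rightarrow> real" where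
  "sl_eig rho n = (THE mu. mu \<in> sl_spec rho \<and> finite {nu \<in> sl_spec rho. nu < mu}
                         \<and> card {nu \<in> sl_spec rho. nu < mu} = n - 1)"

definition sl_efun :: "(real \<Rightarrow> real) \<Rightarrow> nat \<Rightarrow> real \<Rightarrow> real" where
  "sl_efun rho n = (SOME phi. sl_eigenfun rho (sl_eig rho n) phi \<and>
                      integral {0..pi} (\<lambda>x. rho x * (phi x)\<^sup>2) = 1)"

definition tfun :: "real \<Rightarrow> int \<Rightarrow> real \<Rightarrow> complex" where
  "tfun T m t = complex_of_real (1 / sqrt T) * exp (\<i> * complex_of_real (2 * real_of_int m * pi * t / T))"

definition lam :: "(real \<Rightarrow> real) \<Rightarrow> real \<Rightarrow> nat \<Rightarrow> int \<Rightarrow> real" where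
  "lam rho T n m = sl_eig rho n - (2 * real_of_int m * pi / T)\<^sup>2"

definition specL :: "(real \<Rightarrow> real) \<Rightarrow> real \<Rightarrow> real set" where
  "specL rho T = {lam rho T n m | n m. n \<ge> 1}"

definition bplus :: "(real \<Rightarrow> real) \<Rightarrow> real \<Rightarrow> real \<Rightarrow> real" where
  "bplus rho T b = Inf {l \<in> specL rho T. l > b}"

definition Idx :: "(nat \<times> int) set" where
  "Idx = {1..} \<times> UNIV"

definition L2w :: "(real \<Rightarrow> real) \<Rightarrow> real \<Rightarrow> (real \<times> real \<Rightarrow> complex) set" where
  "L2w rho T = {u. (\<lambda>z. indicator (Omega T) z *\<^sub>R u z) \<in> borel_measurable lebesgue \<and>
                  set_integrable lebesgue (Omega T) (\<lambda>z. (cmod (u z))\<^sup>2 * rho (snd z))}"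

definition coef :: "(real \<Rightarrow> real) \<Rightarrow> real \<Rightarrow> (real \<times> real \<Rightarrow> complex) \<Rightarrow> nat \<Rightarrow> int \<Rightarrow> complex" where
  "coef rho T u n m = set_lebesgue_integral lebesgue (Omega T)
     (\<lambda>z. u z * complex_of_real (sl_efun rho n (snd z)) * cnj (tfun T m (fst z)) * complex_of_real (rho (snd z)))"

definition Enorm2 :: "(real \<Rightarrow> real) \<Rightarrow> real \<Rightarrow> real \<Rightarrow> (real \<times> real \<Rightarrow> complex) \<Rightarrow> real" where
  "Enorm2 rho T a u = (\<Sum>\<^sub>\<infinity>(n, m)\<in>Idx. \<bar>lam rho T n m - a\<bar> * (cmod (coef rho T u n m))\<^sup>2)"

definition Espace :: "(real \<Rightarrow> real) \<Rightarrow> real \<Rightarrow> real \<Rightarrow> (real \<times> real \<Rightarrow> complex) set" where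
  "Espace rho T a = {u \<in> L2w rho T.
     (\<lambda>(n, m). \<bar>lam rho T n m - a\<bar> * (cmod (coef rho T u n m))\<^sup>2) summable_on Idx}"

definition Lform :: "(real \<Rightarrow> real) \<Rightarrow> real \<Rightarrow> real \<Rightarrow> real \<Rightarrow> (real \<times> real \<Rightarrow> complex) \<Rightarrow> real" where
  "Lform rho T a b u = (\<Sum>\<^sub>\<infinity>(n, m)\<in>Idx. (lam rho T n m - a - b) * (cmod (coef rho T u n m))\<^sup>2)"

definition basis :: "(real \<Rightarrow> real) \<Rightarrow> real \<Rightarrow> nat \<Rightarrow> int \<Rightarrow> real \<times> real \<Rightarrow> complex" where
  "basis rho T n m z = tfun T m (fst z) * complex_of_real (sl_efun rho n (snd z))"

(* closed subspace of E (closure in the E-norm) spanned by the basis functions indexed by S *)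
definition Espan :: "(real \<Rightarrow> real) \<Rightarrow> real \<Rightarrow> real \<Rightarrow> (nat \<times> int) set \<Rightarrow> (real \<times> real \<Rightarrow> complex) set" where
  "Espan rho T a S = {u \<in> Espace rho T a. \<forall>\<epsilon>>0. \<exists>F c. finite F \<and> F \<subseteq> S \<and>
      Enorm2 rho T a (\<lambda>z. u z - (\<Sum>k\<in>F. c k * basis rho T (fst k) (snd k) z)) < \<epsilon>}"

definition E1 :: "(real \<Rightarrow> real) \<Rightarrow> real \<Rightarrow> real \<Rightarrow> (real \<times> real \<Rightarrow> complex) set" where
  "E1 rho T a = Espan rho T a {(n, m) \<in> Idx. lam rho T n m < a}"

definition E2 :: "(real \<Rightarrow> real) \<Rightarrow> real \<Rightarrow> real \<Rightarrow> real \<Rightarrow> (real \<times> real \<Rightarrow> complex) set" where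
  "E2 rho T a b = Espan rho T a {(n, m) \<in> Idx. a < lam rho T n m \<and> lam rho T n m < b}"

definition E3 :: "(real \<Rightarrow> real) \<Rightarrow> real \<Rightarrow> real \<Rightarrow> real \<Rightarrow> (real \<times> real \<Rightarrow> complex) set" where
  "E3 rho T a b = Espan rho T a {(n, m) \<in> Idx. lam rho T n m > b}"

definition Esum :: "('a \<Rightarrow> complex) set \<Rightarrow> ('a \<Rightarrow> complex) set \<Rightarrow> ('a \<Rightarrow> complex) set" where
  "Esum A B = {(\<lambda>z. u z + v z) | u v. u \<in> A \<and> v \<in> B}"

definition eta :: "(real \<Rightarrow> real) \<Rightarrow> (real \<Rightarrow> real) \<Rightarrow> (real \<Rightarrow> real) \<Rightarrow> real \<Rightarrow> real" where
  "eta rho rho' rho'' x = rho'' x / (2 * rho x) - (rho' x / rho x)\<^sup>2 / 4"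

end

theory Submission
  imports Defs "HOL-Complex_Analysis.Conformal_Mappings"
begin

locale slp =
  fixes r :: "real \<Rightarrow> real"
  assumes r_cont: "continuous_on {0..pi} r"
    and r_pos: "\<And>x. x \<in> {0..pi} \<Longrightarrow> r x > 0"
begin

lemma K_ex: "\<exists>K\<ge>1. \<forall>x\<in>{0..pi}. r x \<le> K \<and> 1 / r x \<le> K"
proof -
  have c1: "continuous_on {0..pi} (\<lambda>x. 1 / r x)"
    apply (intro continuous_intros r_cont) using r_pos by fastforce
  have "bounded (r ` {0..pi})"
    by (intro compact_imp_bounded compact_continuous_image r_cont) auto
  then obtain B1 where B1': "\<forall>y\<in>r ` {0..pi}. norm y \<le> B1"
    unfolding bounded_iff by auto
  have B1: "\<And>x. x \<in> {0..pi} \<Longrightarrow> norm (r x) \<le> B1" using B1' by auto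
  have "bounded ((\<lambda>x. 1 / r x) ` {0..pi})"
    by (intro compact_imp_bounded compact_continuous_image c1) auto
  then obtain B2 where B2': "\<forall>y\<in>(\<lambda>x. 1 / r x) ` {0..pi}. norm y \<le> B2"
    unfolding bounded_iff by auto
  have B2: "\<And>x. x \<in> {0..pi} \<Longrightarrow> norm (1 / r x) \<le> B2" using B2' by auto
  show ?thesis
  proof (intro exI[of _ "max 1 (max B1 B2)"] conjI ballI)
    fix x assume x: "x \<in> {0..pi}"
    have "norm (r x) \<le> B1" "norm (1 / r x) \<le> B2" using B1[OF x] B2[OF x] by auto
    moreover have "r x > 0" using r_pos x by auto
    ultimately show "r x \<le> max 1 (max B1 B2)" "1 / r x \<le> max 1 (max B1 B2)" by auto
  qed auto
qed

definition K where "K = (SOME K. K \<ge> 1 \<and> (\<forall>x\<in>{0..pi}. r x \<le> K \<and> 1 / r x \<le> K))"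

lemma K: "K \<ge> 1" "\<And>x. x \<in> {0..pi} \<Longrightarrow> r x \<le> K" "\<And>x. x \<in> {0..pi} \<Longrightarrow> 1 / r x \<le> K"
proof -
  have "K \<ge> 1 \<and> (\<forall>x\<in>{0..pi}. r x \<le> K \<and> 1 / r x \<le> K)"
    unfolding K_def by (rule someI_ex) (use K_ex in auto)
  then show "K \<ge> 1" "\<And>x. x \<in> {0..pi} \<Longrightarrow> r x \<le> K" "\<And>x. x \<in> {0..pi} \<Longrightarrow> 1 / r x \<le> K" by auto
qed

lemma int_helper:
  fixes f :: "real \<Rightarrow> real" and n :: nat
  assumes fc: "continuous_on {0..pi} f"
    and fb: "\<And>t. t \<in> {0..pi} \<Longrightarrow> 0 \<le> f t \<and> f t \<le> K * (K * t) ^ n / fact n"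
  shows "continuous_on {0..pi} (\<lambda>x. integral {0..x} f)"
    and "\<And>x. x \<in> {0..pi} \<Longrightarrow> ((\<lambda>x. integral {0..x} f) has_real_derivative f x) (at x within {0..pi})"
    and "\<And>x. x \<in> {0..pi} \<Longrightarrow> 0 \<le> integral {0..x} f \<and> integral {0..x} f \<le> (K * x) ^ Suc n / fact (Suc n)"
proof -
  show d: "((\<lambda>x. integral {0..x} f) has_real_derivative f x) (at x within {0..pi})" if "x \<in> {0..pi}" for x
    using integral_has_vector_derivative[OF fc that]
    by (simp add: has_real_derivative_iff_has_vector_derivative)
  show "continuous_on {0..pi} (\<lambda>x. integral {0..x} f)"
    using d by (meson DERIV_continuous continuous_on_eq_continuous_within)
  fix x assume x: "x \<in> {0..pi}"
  have sub: "{0..x} \<subseteq> {0..pi}" using x by auto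
  have fi: "f integrable_on {0..x}"
    by (intro integrable_continuous_interval continuous_on_subset[OF fc sub])
  have "0 \<le> integral {0..x} f"
    using fb sub by (intro integral_nonneg fi) auto
  moreover
  have gder: "((\<lambda>t. (K * t) ^ Suc n / fact (Suc n)) has_vector_derivative K * (K * t) ^ n / fact n) (at t within {0..x})" for t
  proof -
    have "((\<lambda>t. (K * t) ^ Suc n / fact (Suc n)) has_real_derivative
          K * (K * t) ^ n / fact n) (at t within {0..x})"
    proof -
      have "((\<lambda>t. (K * t) ^ Suc n / fact (Suc n)) has_real_derivative
          (real (Suc n) * (K * t) ^ n * K) / fact (Suc n)) (at t within {0..x})"
        by (rule derivative_eq_intros refl | simp)+
      moreover have "(real (Suc n) * (K * t) ^ n * K) / fact (Suc n) = K * (K * t) ^ n / fact n"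
        by (simp add: fact_Suc del: of_nat_Suc)
      ultimately show ?thesis by (simp only:)
    qed
    then show ?thesis by (simp add: has_real_derivative_iff_has_vector_derivative)
  qed
  have "((\<lambda>t. K * (K * t) ^ n / fact n) has_integral (K * x) ^ Suc n / fact (Suc n) - (K * 0) ^ Suc n / fact (Suc n)) {0..x}"
    using x by (intro fundamental_theorem_of_calculus gder) auto
  then have "((\<lambda>t. K * (K * t) ^ n / fact n) has_integral (K * x) ^ Suc n / fact (Suc n)) {0..x}"
    by simp
  then have "integral {0..x} f \<le> (K * x) ^ Suc n / fact (Suc n)"
    using fb sub by (intro has_integral_le[OF integrable_integral[OF fi]]) auto
  ultimately show "0 \<le> integral {0..x} f \<and> integral {0..x} f \<le> (K * x) ^ Suc n / fact (Suc n)" by auto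
qed

primrec bb :: "nat \<Rightarrow> real \<Rightarrow> real" where
  "bb 0 = (\<lambda>x. 1)"
| "bb (Suc j) = (\<lambda>x. integral {0..x} (\<lambda>t. r t * integral {0..t} (\<lambda>s. bb j s / r s)))"

definition aa :: "nat \<Rightarrow> real \<Rightarrow> real" where
  "aa j x = integral {0..x} (\<lambda>s. bb j s / r s)"

lemma bb_Suc': "bb (Suc j) = (\<lambda>x. integral {0..x} (\<lambda>t. r t * aa j t))"
  by (simp add: aa_def)

lemma r_ne: "x \<in> {0..pi} \<Longrightarrow> r x \<noteq> 0" using r_pos[of x] by auto

lemma ab_props:
  "continuous_on {0..pi} (bb j) \<and> (\<forall>x\<in>{0..pi}. 0 \<le> bb j x \<and> bb j x \<le> (K*x)^(2*j)/fact(2*j))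
   \<and> continuous_on {0..pi} (aa j) \<and> (\<forall>x\<in>{0..pi}. 0 \<le> aa j x \<and> aa j x \<le> (K*x)^(Suc (2*j))/fact(Suc (2*j)))
   \<and> (\<forall>x\<in>{0..pi}. (aa j has_real_derivative bb j x / r x) (at x within {0..pi}))"
proof (induction j)
  case 0
  have c: "continuous_on {0..pi} (\<lambda>s. bb 0 s / r s)"
    using r_ne by (auto intro!: continuous_intros r_cont)
  have b: "0 \<le> bb 0 t / r t \<and> bb 0 t / r t \<le> K * (K * t) ^ 0 / fact 0" if "t \<in> {0..pi}" for t
    using K(3)[OF that] r_pos[OF that] by auto
  note h = int_helper[OF c b, folded aa_def]
  show ?case using h by (auto simp: aa_def[abs_def])
next
  case (Suc j)
  have c1: "continuous_on {0..pi} (\<lambda>t. r t * aa j t)"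
    using Suc.IH by (auto intro!: continuous_intros r_cont)
  have b1: "0 \<le> r t * aa j t \<and> r t * aa j t \<le> K * (K * t) ^ Suc (2*j) / fact (Suc (2*j))" if "t \<in> {0..pi}" for t
  proof -
    have "0 \<le> aa j t" "aa j t \<le> (K * t) ^ Suc (2*j) / fact (Suc (2*j))" using Suc.IH that by auto
    moreover have "0 < r t" "r t \<le> K" using r_pos K that by auto
    ultimately have "r t * aa j t \<le> K * ((K * t) ^ Suc (2*j) / fact (Suc (2*j)))"
      by (intro mult_mono) auto
    then show ?thesis using \<open>0 \<le> aa j t\<close> \<open>0 < r t\<close> by (simp only: times_divide_eq_right) simp
  qed
  note h1 = int_helper[OF c1 b1]
  have e: "Suc (Suc (2 * j)) = 2 * Suc j" by simp
  have bbc: "continuous_on {0..pi} (bb (Suc j))" and bbb: "\<forall>x\<in>{0..pi}. 0 \<le> bb (Suc j) x \<and> bb (Suc j) x \<le> (K*x)^(2*Suc j)/fact(2*Suc j)"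
    using h1(1) h1(3) unfolding bb_Suc' e by auto
  have c2: "continuous_on {0..pi} (\<lambda>s. bb (Suc j) s / r s)"
    using r_ne bbc by (auto intro!: continuous_intros r_cont)
  have b2: "0 \<le> bb (Suc j) t / r t \<and> bb (Suc j) t / r t \<le> K * (K * t) ^ (2*Suc j) / fact (2*Suc j)" if "t \<in> {0..pi}" for t
  proof -
    have "0 \<le> bb (Suc j) t" "bb (Suc j) t \<le> (K * t) ^ (2*Suc j) / fact (2*Suc j)" using bbb that by auto
    moreover have "0 < r t" "1 / r t \<le> K" using r_pos K that by auto
    ultimately have "bb (Suc j) t * (1 / r t) \<le> (K * t) ^ (2*Suc j) / fact (2*Suc j) * K"
      by (intro mult_mono) auto
    then show ?thesis using \<open>0 \<le> bb (Suc j) t\<close> \<open>0 < r t\<close> by (auto simp: field_simps)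
  qed
  note h2 = int_helper[OF c2 b2, folded aa_def]
  show ?case using bbc bbb h2 by (auto simp: aa_def[abs_def])
qed

lemma bb_cont: "continuous_on {0..pi} (bb j)" and bb_bnd: "x \<in> {0..pi} \<Longrightarrow> 0 \<le> bb j x \<and> bb j x \<le> (K*x)^(2*j)/fact(2*j)"
  and aa_cont: "continuous_on {0..pi} (aa j)" and aa_bnd: "x \<in> {0..pi} \<Longrightarrow> 0 \<le> aa j x \<and> aa j x \<le> (K*x)^(Suc (2*j))/fact(Suc (2*j))"
  and aa_der: "x \<in> {0..pi} \<Longrightarrow> (aa j has_real_derivative bb j x / r x) (at x within {0..pi})"
  using ab_props[of j] by auto

lemma bb_der: "x \<in> {0..pi} \<Longrightarrow> (bb (Suc j) has_real_derivative r x * aa j x) (at x within {0..pi})"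
proof -
  assume x: "x \<in> {0..pi}"
  have "continuous_on {0..pi} (\<lambda>t. r t * aa j t)"
    using aa_cont by (auto intro!: continuous_intros r_cont)
  from integral_has_vector_derivative[OF this x] show ?thesis
    by (simp add: has_real_derivative_iff_has_vector_derivative bb_Suc' del: bb.simps)
qed

lemma bb0_der: "(bb 0 has_real_derivative 0) (at x within S)"
  by simp

lemma summable_fact2:
  fixes A :: real assumes "A \<ge> 0"
  shows "summable (\<lambda>j. A ^ j / fact (2 * j))" "summable (\<lambda>j. A ^ j / fact (Suc (2 * j)))"
proof -
  have s: "summable (\<lambda>j. inverse (fact j) * A ^ j)" by (rule summable_exp)
  show "summable (\<lambda>j. A ^ j / fact (2 * j))"
  proof (rule summable_comparison_test'[OF s])
    fix j :: nat
    have "fact j \<le> (fact (2 * j) :: real)" by (intro fact_mono) auto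
    then have "A ^ j / fact (2 * j) \<le> A ^ j / fact j"
      using assms by (intro divide_left_mono) auto
    then show "norm (A ^ j / fact (2 * j)) \<le> inverse (fact j) * A ^ j"
      using assms by (simp add: divide_inverse mult.commute)
  qed
  show "summable (\<lambda>j. A ^ j / fact (Suc (2 * j)))"
  proof (rule summable_comparison_test'[OF s])
    fix j :: nat
    have "fact j \<le> (fact (Suc (2 * j)) :: real)" by (intro fact_mono) auto
    then have "A ^ j / fact (Suc (2 * j)) \<le> A ^ j / fact j"
      using assms by (intro divide_left_mono) auto
    then show "norm (A ^ j / fact (Suc (2 * j))) \<le> inverse (fact j) * A ^ j"
      using assms by (simp add: divide_inverse mult.commute)
  qed
qed

lemma aa_term_bnd:
  assumes x: "x \<in> {0..pi}" and m: "\<bar>\<mu>\<bar> \<le> M"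
  shows "norm ((-\<mu>) ^ j * aa j x) \<le> (K * pi) * (M * (K * pi)^2) ^ j / fact (Suc (2 * j))"
proof -
  have K0: "K \<ge> 0" using K(1) by auto
  have "aa j x \<le> (K * x) ^ Suc (2 * j) / fact (Suc (2 * j))" using aa_bnd[OF x] by auto
  also have "\<dots> \<le> (K * pi) ^ Suc (2 * j) / fact (Suc (2 * j))"
    using x K0 by (intro divide_right_mono power_mono mult_left_mono) auto
  finally have a: "\<bar>aa j x\<bar> \<le> (K * pi) ^ Suc (2 * j) / fact (Suc (2 * j))" using aa_bnd[OF x] by auto
  have "norm ((-\<mu>) ^ j * aa j x) = \<bar>\<mu>\<bar> ^ j * \<bar>aa j x\<bar>" by (simp add: abs_mult power_abs)
  also have "\<dots> \<le> M ^ j * ((K * pi) ^ Suc (2 * j) / fact (Suc (2 * j)))"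
    using a m by (intro mult_mono power_mono) auto
  also have "\<dots> = (K * pi) * (M * (K * pi)^2) ^ j / fact (Suc (2 * j))"
    by (simp add: power_mult_distrib power_mult[symmetric] field_simps)
  finally show ?thesis .
qed

lemma bb_term_bnd:
  assumes x: "x \<in> {0..pi}" and m: "\<bar>\<mu>\<bar> \<le> M"
  shows "norm ((-\<mu>) ^ j * bb j x) \<le> (M * (K * pi)^2) ^ j / fact (2 * j)"
proof -
  have K0: "K \<ge> 0" using K(1) by auto
  have "bb j x \<le> (K * x) ^ (2 * j) / fact (2 * j)" using bb_bnd[OF x] by auto
  also have "\<dots> \<le> (K * pi) ^ (2 * j) / fact (2 * j)"
    using x K0 by (intro divide_right_mono power_mono mult_left_mono) auto
  finally have a: "\<bar>bb j x\<bar> \<le> (K * pi) ^ (2 * j) / fact (2 * j)" using bb_bnd[OF x] by auto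
  have "norm ((-\<mu>) ^ j * bb j x) = \<bar>\<mu>\<bar> ^ j * \<bar>bb j x\<bar>" by (simp add: abs_mult power_abs)
  also have "\<dots> \<le> M ^ j * ((K * pi) ^ (2 * j) / fact (2 * j))"
    using a m by (intro mult_mono power_mono) auto
  also have "\<dots> = (M * (K * pi)^2) ^ j / fact (2 * j)"
    by (simp add: power_mult_distrib power_mult[symmetric] field_simps)
  finally show ?thesis .
qed

lemma summ_aa: "summable (\<lambda>j. (K * pi) * (M * (K * pi)^2) ^ j / fact (Suc (2 * j)))" if "M \<ge> 0" for M
  using summable_mult[OF summable_fact2(2)[of "M * (K * pi)^2"], of "K * pi"] that
  by (simp add: mult.assoc times_divide_eq_right)

lemma summ_bb: "summable (\<lambda>j. (M * (K * pi)^2) ^ j / fact (2 * j))" if "M \<ge> 0" for M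
  using summable_fact2(1)[of "M * (K * pi)^2"] that by simp

definition Ys :: "real \<Rightarrow> real \<Rightarrow> real" where "Ys \<mu> x = (\<Sum>j. (-\<mu>) ^ j * aa j x)"
definition Ws :: "real \<Rightarrow> real \<Rightarrow> real" where "Ws \<mu> x = (\<Sum>j. (-\<mu>) ^ j * bb j x)"

lemma summable_aa: assumes x: "x \<in> {0..pi}" shows "summable (\<lambda>j. (-\<mu>) ^ j * aa j x)"
proof (rule summable_comparison_test'[OF summ_aa[of "\<bar>\<mu>\<bar>"]])
  fix j :: nat show "norm ((-\<mu>) ^ j * aa j x) \<le> (K * pi) * (\<bar>\<mu>\<bar> * (K * pi)^2) ^ j / fact (Suc (2 * j))"
    by (rule aa_term_bnd[OF x]) simp
qed simp

lemma summable_bb: assumes x: "x \<in> {0..pi}" shows "summable (\<lambda>j. (-\<mu>) ^ j * bb j x)"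
proof (rule summable_comparison_test'[OF summ_bb[of "\<bar>\<mu>\<bar>"]])
  fix j :: nat show "norm ((-\<mu>) ^ j * bb j x) \<le> (\<bar>\<mu>\<bar> * (K * pi)^2) ^ j / fact (2 * j)"
    by (rule bb_term_bnd[OF x]) simp
qed simp

lemma aa_0: "aa j 0 = 0" by (simp add: aa_def)
lemma bb_0: "bb j 0 = (if j = 0 then 1 else 0)" by (cases j) auto

lemma Ys_0: "Ys \<mu> 0 = 0" by (simp add: Ys_def aa_0)
lemma Ws_0: "Ws \<mu> 0 = 1"
proof -
  have "(\<lambda>j. (-\<mu>) ^ j * bb j 0) = (\<lambda>j. if j = 0 then (\<lambda>_. 1::real) j else 0)" by (auto simp: bb_0)
  then show ?thesis unfolding Ws_def using sums_single[of 0 "\<lambda>_. 1::real"] by (simp add: sums_iff)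
qed

lemma Ys_der:
  assumes x: "x \<in> {0..pi}"
  shows "(Ys \<mu> has_real_derivative Ws \<mu> x / r x) (at x within {0..pi})"
proof -
  have ul: "uniform_limit {0..pi} (\<lambda>n x. \<Sum>i<n. (-\<mu>) ^ i * (bb i x / r x)) (\<lambda>x. \<Sum>i. (-\<mu>) ^ i * (bb i x / r x)) sequentially"
  proof (rule Weierstrass_m_test)
    show "summable (\<lambda>j. K * ((\<bar>\<mu>\<bar> * (K * pi)^2) ^ j / fact (2 * j)))"
      by (intro summable_mult summ_bb) simp
    fix n and y :: real assume y: "y \<in> {0..pi}"
    have "norm ((-\<mu>) ^ n * (bb n y / r y)) = norm ((-\<mu>) ^ n * bb n y) * (1 / r y)"
      using r_pos[OF y] by (simp add: abs_mult)
    also have "\<dots> \<le> ((\<bar>\<mu>\<bar> * (K * pi)^2) ^ n / fact (2 * n)) * K"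
      using bb_term_bnd[OF y, of \<mu> "\<bar>\<mu>\<bar>" n] K(3)[OF y] r_pos[OF y] by (intro mult_mono) auto
    finally show "norm ((-\<mu>) ^ n * (bb n y / r y)) \<le> K * ((\<bar>\<mu>\<bar> * (K * pi)^2) ^ n / fact (2 * n))"
      by (simp add: mult.commute)
  qed
  have der: "((\<lambda>x. (-\<mu>) ^ n * aa n x) has_field_derivative (-\<mu>) ^ n * (bb n y / r y)) (at y within {0..pi})"
    if "y \<in> {0..pi}" for n y
    using aa_der[OF that, of n] by (auto intro!: derivative_eq_intros)
  have z: "(0::real) \<in> {0..pi}" by auto
  obtain g where g': "\<forall>y\<in>{0..pi}. (\<lambda>n. (-\<mu>) ^ n * aa n y) sums g y \<and>
      (g has_field_derivative (\<Sum>i. (-\<mu>) ^ i * (bb i y / r y))) (at y within {0..pi})"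
    using has_field_derivative_series[OF convex_real_interval(5) der ul z summable_aa[OF z]] by blast
  note g = g'[rule_format]
  have gY: "g y = Ys \<mu> y" if "y \<in> {0..pi}" for y
    using g[OF that] by (simp add: Ys_def sums_iff)
  have "(\<Sum>i. (-\<mu>) ^ i * (bb i x / r x)) = Ws \<mu> x / r x"
    unfolding Ws_def using suminf_divide[OF summable_bb[OF x, of \<mu>], of "r x"] by (simp add: field_simps)
  with g[OF x] have "(g has_field_derivative Ws \<mu> x / r x) (at x within {0..pi})" by simp
  then show ?thesis
    by (rule has_field_derivative_transform_within[where d=1]) (use x gY in auto)
qed

lemma Ws_der:
  assumes x: "x \<in> {0..pi}"
  shows "(Ws \<mu> has_real_derivative - \<mu> * r x * Ys \<mu> x) (at x within {0..pi})"
proof -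
  have ul: "uniform_limit {0..pi} (\<lambda>n x. \<Sum>i<n. (-\<mu>) ^ Suc i * (r x * aa i x)) (\<lambda>x. \<Sum>i. (-\<mu>) ^ Suc i * (r x * aa i x)) sequentially"
  proof (rule Weierstrass_m_test)
    show "summable (\<lambda>j. (\<bar>\<mu>\<bar> * K) * ((K * pi) * (\<bar>\<mu>\<bar> * (K * pi)^2) ^ j / fact (Suc (2 * j))))"
      by (intro summable_mult summ_aa) simp
    fix n and y :: real assume y: "y \<in> {0..pi}"
    have "norm ((-\<mu>) ^ Suc n * (r y * aa n y)) = (\<bar>\<mu>\<bar> * r y) * norm ((-\<mu>) ^ n * aa n y)"
      using r_pos[OF y] by (simp add: abs_mult)
    also have "\<dots> \<le> (\<bar>\<mu>\<bar> * K) * ((K * pi) * (\<bar>\<mu>\<bar> * (K * pi)^2) ^ n / fact (Suc (2 * n)))"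
      using aa_term_bnd[OF y, of \<mu> "\<bar>\<mu>\<bar>" n] K(2)[OF y] r_pos[OF y] by (intro mult_mono) auto
    finally show "norm ((-\<mu>) ^ Suc n * (r y * aa n y)) \<le> (\<bar>\<mu>\<bar> * K) * ((K * pi) * (\<bar>\<mu>\<bar> * (K * pi)^2) ^ n / fact (Suc (2 * n)))" .
  qed
  have der: "((\<lambda>x. (-\<mu>) ^ Suc n * bb (Suc n) x) has_field_derivative (-\<mu>) ^ Suc n * (r y * aa n y)) (at y within {0..pi})"
    if "y \<in> {0..pi}" for n y
    using bb_der[OF that, of n] by (auto intro!: derivative_eq_intros simp del: bb.simps power_Suc)
  have s0: "summable (\<lambda>n. (-\<mu>) ^ Suc n * bb (Suc n) 0)"
    using summable_bb[of 0 \<mu>] by (subst summable_Suc_iff) auto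
  have z: "(0::real) \<in> {0..pi}" by auto
  obtain g where g': "\<forall>y\<in>{0..pi}. (\<lambda>n. (-\<mu>) ^ Suc n * bb (Suc n) y) sums g y \<and>
      (g has_field_derivative (\<Sum>i. (-\<mu>) ^ Suc i * (r y * aa i y))) (at y within {0..pi})"
    using has_field_derivative_series[OF convex_real_interval(5) der ul z s0] by blast
  note g = g'[rule_format]
  have gW: "g y = Ws \<mu> y - 1" if "y \<in> {0..pi}" for y
  proof -
    have "g y = (\<Sum>n. (-\<mu>) ^ Suc n * bb (Suc n) y)" using g[OF that] by (simp add: sums_iff)
    also have "\<dots> = Ws \<mu> y - 1"
      unfolding Ws_def using suminf_split_head[OF summable_bb[OF that, of \<mu>]] by (simp del: power_Suc)
    finally show ?thesis .
  qed
  have "(\<Sum>i. (-\<mu>) ^ Suc i * (r x * aa i x)) = (- \<mu> * r x) * Ys \<mu> x"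
    unfolding Ys_def using suminf_mult[OF summable_aa[OF x, of \<mu>], of "- \<mu> * r x"] by (simp add: field_simps)
  with g[OF x] have "(g has_field_derivative (- \<mu> * r x) * Ys \<mu> x) (at x within {0..pi})" by simp
  then have "((\<lambda>y. g y + 1) has_field_derivative (- \<mu> * r x) * Ys \<mu> x) (at x within {0..pi})"
    by (auto intro!: derivative_eq_intros)
  then show ?thesis
    by (rule has_field_derivative_transform_within[where d=1]) (use x gW in auto)
qed

lemma incr_within:
  fixes f f' :: "real \<Rightarrow> real"
  assumes ab: "a \<le> b" "0 \<le> a" "b \<le> pi"
    and d: "\<And>x. x \<in> {0..pi} \<Longrightarrow> (f has_real_derivative f' x) (at x within {0..pi})"
    and n: "\<And>x. x \<in> {0..pi} \<Longrightarrow> f' x \<ge> 0"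
  shows "f a \<le> f b"
proof (rule DERIV_nonneg_imp_increasing_open[OF ab(1)])
  fix x assume x: "a < x" "x < b"
  then have "x \<in> interior {0..pi}" using ab by auto
  then have "at x within {0..pi} = at x" by (rule at_within_interior)
  then show "\<exists>y. (f has_real_derivative y) (at x) \<and> 0 \<le> y"
    using d[of x] n[of x] x ab by auto
next
  have "continuous_on {0..pi} f"
    using d by (meson DERIV_continuous continuous_on_eq_continuous_within)
  then show "continuous_on {a..b} f" by (rule continuous_on_subset) (use ab in auto)
qed

lemma uniq:
  fixes D E :: "real \<Rightarrow> real"
  assumes x0: "x0 \<in> {0..pi}"
    and dD: "\<And>x. x \<in> {0..pi} \<Longrightarrow> (D has_real_derivative E x / r x) (at x within {0..pi})"
    and dE: "\<And>x. x \<in> {0..pi} \<Longrightarrow> (E has_real_derivative - \<mu> * r x * D x) (at x within {0..pi})"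
    and z: "D x0 = 0" "E x0 = 0"
    and x: "x \<in> {0..pi}"
  shows "D x = 0 \<and> E x = 0"
proof -
  define C where "C = K + \<bar>\<mu>\<bar> * K"
  define V where "V x = (D x)^2 + (E x)^2" for x
  define V' where "V' x = 2 * D x * (E x / r x) + 2 * E x * (- \<mu> * r x * D x)" for x
  have dV: "(V has_real_derivative V' x) (at x within {0..pi})" if "x \<in> {0..pi}" for x
    unfolding V_def V'_def using dD[OF that] dE[OF that] by (auto intro!: derivative_eq_intros)
  have bV: "\<bar>V' x\<bar> \<le> C * V x" if "x \<in> {0..pi}" for x
  proof -
    have "V' x = (2 * D x * E x) * (1 / r x - \<mu> * r x)" unfolding V'_def by (simp add: field_simps)
    also have "\<bar>\<dots>\<bar> = \<bar>2 * D x * E x\<bar> * \<bar>1 / r x - \<mu> * r x\<bar>" by (simp add: abs_mult)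
    also have "\<dots> \<le> V x * C"
    proof (rule mult_mono)
      show "\<bar>2 * D x * E x\<bar> \<le> V x" unfolding V_def
        using sum_squares_bound[of "D x" "E x"] sum_squares_bound[of "- D x" "E x"] by (auto simp: abs_if)
      have "\<bar>1 / r x - \<mu> * r x\<bar> \<le> \<bar>1 / r x\<bar> + \<bar>\<mu>\<bar> * \<bar>r x\<bar>" using abs_triangle_ineq4[of "1 / r x" "\<mu> * r x"] by (simp add: abs_mult)
      also have "\<dots> \<le> K + \<bar>\<mu>\<bar> * K" using K(2,3)[OF that] r_pos[OF that] mult_left_mono[of "r x" K "\<bar>\<mu>\<bar>"] by auto
      finally show "\<bar>1 / r x - \<mu> * r x\<bar> \<le> C" by (simp add: C_def)
    qed (auto simp: V_def)
    finally show ?thesis by (simp add: mult.commute)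
  qed
  have V0: "V x0 = 0" using z by (simp add: V_def)
  have Vnn: "V y \<ge> 0" for y by (simp add: V_def)
  have "V x \<le> 0"
  proof (cases "x0 \<le> x")
    case True
    have "- (V x * exp (- C * x)) \<ge> - (V x0 * exp (- C * x0))"
    proof (rule incr_within[where f="\<lambda>y. - (V y * exp (- C * y))" and f'="\<lambda>y. - (V' y * exp (- C * y) - V y * C * exp (- C * y))"])
      fix y assume y: "y \<in> {0..pi}"
      show "((\<lambda>y. - (V y * exp (- C * y))) has_real_derivative - (V' y * exp (- C * y) - V y * C * exp (- C * y))) (at y within {0..pi})"
        using dV[OF y] by (auto intro!: derivative_eq_intros simp: algebra_simps)
      have "V' y - C * V y \<le> 0" using bV[OF y] by auto
      then have "(V' y - C * V y) * exp (- C * y) \<le> 0" by (simp add: mult_nonpos_nonneg)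
      then show "0 \<le> - (V' y * exp (- C * y) - V y * C * exp (- C * y))" by (simp add: algebra_simps)
    qed (use True x x0 in auto)
    then have "V x * exp (- C * x) \<le> 0" using V0 by simp
    then show ?thesis by (simp add: mult_le_0_iff)
  next
    case False
    have "V x * exp (C * x) \<le> V x0 * exp (C * x0)"
    proof (rule incr_within[where f="\<lambda>y. V y * exp (C * y)" and f'="\<lambda>y. V' y * exp (C * y) + V y * C * exp (C * y)"])
      fix y assume y: "y \<in> {0..pi}"
      show "((\<lambda>y. V y * exp (C * y)) has_real_derivative V' y * exp (C * y) + V y * C * exp (C * y)) (at y within {0..pi})"
        using dV[OF y] by (auto intro!: derivative_eq_intros simp: algebra_simps)
      have "V' y + C * V y \<ge> 0" using bV[OF y] by auto
      then have "(V' y + C * V y) * exp (C * y) \<ge> 0" by simp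
      then show "0 \<le> V' y * exp (C * y) + V y * C * exp (C * y)" by (simp add: algebra_simps)
    qed (use False x x0 in auto)
    then have "V x * exp (C * x) \<le> 0" using V0 by simp
    then show ?thesis by (simp add: mult_le_0_iff)
  qed
  with Vnn[of x] have "V x = 0" by auto
  then show ?thesis unfolding V_def by (simp add: sum_power2_eq_zero_iff)
qed

lemma YW_nonzero: "x \<in> {0..pi} \<Longrightarrow> Ys \<mu> x = 0 \<Longrightarrow> Ws \<mu> x = 0 \<Longrightarrow> False"
  using uniq[of x "Ys \<mu>" "Ws \<mu>" \<mu> 0] Ys_der Ws_der Ws_0 by auto

lemma eigen_rep:
  assumes "sl_eigenfun r \<mu> \<phi>"
  shows "\<exists>c. c \<noteq> 0 \<and> (\<forall>x\<in>{0..pi}. \<phi> x = c * Ys \<mu> x)"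
proof -
  obtain \<phi>' where d: "\<And>x. x \<in> {0..pi} \<Longrightarrow> (\<phi> has_real_derivative \<phi>' x) (at x within {0..pi}) \<and>
        ((\<lambda>y. r y * \<phi>' y) has_real_derivative (- \<mu> * r x * \<phi> x)) (at x within {0..pi})"
    and b: "\<phi> 0 = 0" "\<phi> pi = 0" and nz: "\<exists>x\<in>{0..pi}. \<phi> x \<noteq> 0"
    using assms unfolding sl_eigenfun_def by blast
  define c where "c = r 0 * \<phi>' 0"
  define D where "D x = \<phi> x - c * Ys \<mu> x" for x
  define E where "E x = r x * \<phi>' x - c * Ws \<mu> x" for x
  have dD: "(D has_real_derivative E x / r x) (at x within {0..pi})" if x: "x \<in> {0..pi}" for x
  proof -
    have "(D has_real_derivative \<phi>' x - c * (Ws \<mu> x / r x)) (at x within {0..pi})"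
      unfolding D_def using d[OF x] Ys_der[OF x, of \<mu>] by (auto intro!: derivative_eq_intros)
    moreover have "\<phi>' x - c * (Ws \<mu> x / r x) = E x / r x"
      unfolding E_def using r_ne[OF x] by (simp add: field_simps)
    ultimately show ?thesis by simp
  qed
  have dE: "(E has_real_derivative - \<mu> * r x * D x) (at x within {0..pi})" if x: "x \<in> {0..pi}" for x
  proof -
    have "(E has_real_derivative (- \<mu> * r x * \<phi> x) - c * (- \<mu> * r x * Ys \<mu> x)) (at x within {0..pi})"
      unfolding E_def by (rule DERIV_diff[OF conjunct2[OF d[OF x]] DERIV_cmult[OF Ws_der[OF x]]])
    moreover have "(- \<mu> * r x * \<phi> x) - c * (- \<mu> * r x * Ys \<mu> x) = - \<mu> * r x * D x"
      unfolding D_def by (simp add: field_simps)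
    ultimately show ?thesis by simp
  qed
  have z: "D 0 = 0" "E 0 = 0" unfolding D_def E_def c_def using b Ys_0 Ws_0 by auto
  have eq: "\<phi> x = c * Ys \<mu> x" if "x \<in> {0..pi}" for x
    using uniq[of 0 D E \<mu> x, OF _ dD dE z that] by (auto simp: D_def)
  have "c \<noteq> 0" using nz eq by auto
  with eq show ?thesis by blast
qed

lemma Ys_nontriv: "\<exists>x\<in>{0..pi}. Ys \<mu> x \<noteq> 0"
proof (rule ccontr)
  assume "\<not> ?thesis"
  then have z: "\<And>x. x \<in> {0..pi} \<Longrightarrow> Ys \<mu> x = 0" by auto
  define m where "m = pi / 2"
  have m: "m \<in> {0..pi}" "m \<in> interior {0..pi}" by (auto simp: m_def)
  have w: "Ws \<mu> m \<noteq> 0" using YW_nonzero[OF m(1)] z[OF m(1)] by auto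
  have d1: "(Ys \<mu> has_real_derivative Ws \<mu> m / r m) (at m)"
    using Ys_der[OF m(1)] at_within_interior[OF m(2)] by simp
  have "((\<lambda>_. 0::real) has_real_derivative 0) (at m within {0..pi})" by simp
  then have "(Ys \<mu> has_real_derivative 0) (at m within {0..pi})"
    by (rule has_field_derivative_transform_within[where d=1]) (use m z in auto)
  then have d2: "(Ys \<mu> has_real_derivative 0) (at m)" using at_within_interior[OF m(2)] by simp
  have "Ws \<mu> m / r m = 0" using DERIV_unique[OF d1 d2] .
  then show False using w r_ne[OF m(1)] by simp
qed

lemma spec_iff: "\<mu> \<in> sl_spec r \<longleftrightarrow> Ys \<mu> pi = 0"
proof
  assume "\<mu> \<in> sl_spec r"
  then obtain \<phi> where e: "sl_eigenfun r \<mu> \<phi>" unfolding sl_spec_def by auto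
  then obtain c where "c \<noteq> 0" "\<forall>x\<in>{0..pi}. \<phi> x = c * Ys \<mu> x" using eigen_rep by blast
  moreover have "\<phi> pi = 0" using e unfolding sl_eigenfun_def by auto
  ultimately show "Ys \<mu> pi = 0" by auto
next
  assume p: "Ys \<mu> pi = 0"
  have "sl_eigenfun r \<mu> (Ys \<mu>)"
    unfolding sl_eigenfun_def
  proof (intro conjI exI[of _ "\<lambda>x. Ws \<mu> x / r x"] ballI)
    fix x :: real assume x: "x \<in> {0..pi}"
    show "(Ys \<mu> has_real_derivative Ws \<mu> x / r x) (at x within {0..pi})" by (rule Ys_der[OF x])
    show "((\<lambda>y. r y * (Ws \<mu> y / r y)) has_real_derivative - \<mu> * r x * Ys \<mu> x) (at x within {0..pi})"
      by (rule has_field_derivative_transform_within[OF Ws_der[OF x] zero_less_one x]) (use r_ne in auto)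
  qed (use p Ys_0 Ys_nontriv in auto)
  then show "\<mu> \<in> sl_spec r" unfolding sl_spec_def by auto
qed

lemma aa0_pos: "aa 0 pi > 0"
proof -
  have c: "continuous_on {0..pi} (\<lambda>s. 1 / r s)" using r_ne by (auto intro!: continuous_intros r_cont)
  have "integral {0..pi} (\<lambda>s. 1 / K) \<le> integral {0..pi} (\<lambda>s. 1 / r s)"
  proof (rule integral_le)
    show "(\<lambda>s. 1 / r s) integrable_on {0..pi}" by (rule integrable_continuous_interval[OF c])
    fix s assume s: "s \<in> {0..pi}"
    show "1 / K \<le> 1 / r s" using K(2)[OF s] r_pos[OF s] by (intro divide_left_mono) auto
  qed auto
  moreover have "integral {0..pi} (\<lambda>s. 1 / K) > 0" using K(1) by simp
  ultimately show ?thesis by (simp add: aa_def)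
qed

lemma Ys_pos_nonpos: assumes "\<mu> \<le> 0" shows "Ys \<mu> pi > 0"
proof -
  have p: "pi \<in> {0..pi}" by auto
  have "sum (\<lambda>j. (-\<mu>) ^ j * aa j pi) {0} \<le> Ys \<mu> pi"
    unfolding Ys_def using aa_bnd[OF p] assms by (intro sum_le_suminf summable_aa p) auto
  then show ?thesis using aa0_pos by simp
qed

lemma spec_pos: "\<mu> \<in> sl_spec r \<Longrightarrow> \<mu> > 0"
  using Ys_pos_nonpos[of \<mu>] spec_iff by force

definition Fc :: "complex \<Rightarrow> complex" where
  "Fc z = (\<Sum>j. ((-1) ^ j * of_real (aa j pi)) * z ^ j)"

lemma Fc_summable: "summable (\<lambda>j. ((-1) ^ j * of_real (aa j pi)) * (z::complex) ^ j)"
proof (rule summable_comparison_test'[OF summ_aa[of "norm z"]])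
  have p: "pi \<in> {0..pi}" by auto
  fix j :: nat
  have "norm (((-1) ^ j * of_real (aa j pi)) * z ^ j) = norm ((- norm z) ^ j * aa j pi)"
    by (simp add: norm_mult norm_power abs_mult power_abs)
  also have "\<dots> \<le> (K * pi) * (norm z * (K * pi)^2) ^ j / fact (Suc (2 * j))"
    by (rule aa_term_bnd[OF p]) simp
  finally show "norm (((-1) ^ j * of_real (aa j pi)) * z ^ j) \<le> (K * pi) * (norm z * (K * pi)^2) ^ j / fact (Suc (2 * j))" .
qed simp

lemma Fc_real: "Fc (of_real \<mu>) = of_real (Ys \<mu> pi)"
proof -
  have p: "pi \<in> {0..pi}" by auto
  have "(\<lambda>j. of_real ((-\<mu>) ^ j * aa j pi) :: complex) sums of_real (Ys \<mu> pi)"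
    unfolding Ys_def by (rule sums_of_real[OF summable_sums[OF summable_aa[OF p]]])
  moreover have "(\<lambda>j. of_real ((-\<mu>) ^ j * aa j pi) :: complex) = (\<lambda>j. ((-1) ^ j * of_real (aa j pi)) * (of_real \<mu>) ^ j)"
    by (auto simp: power_minus')
  ultimately show ?thesis unfolding Fc_def by (simp add: sums_iff)
qed

lemma Fc_holo: "Fc holomorphic_on UNIV"
proof -
  have "Fc field_differentiable (at z)" for z
    unfolding Fc_def[abs_def] field_differentiable_def
    using termdiffs_strong_converges_everywhere[OF Fc_summable] by blast
  then show ?thesis unfolding holomorphic_on_def by (simp add: field_differentiable_at_within)
qed

lemma spec_finite_below: "finite {\<mu> \<in> sl_spec r. \<mu> \<le> M}"
proof (cases "{\<mu> \<in> sl_spec r. \<mu> \<le> M} = {}")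
  case False
  then obtain \<mu>1 where m1: "\<mu>1 \<in> sl_spec r" by auto
  have nc: "\<not> Fc constant_on UNIV"
  proof
    assume "Fc constant_on UNIV"
    then have "Fc (of_real \<mu>1) = Fc (of_real 0)" unfolding constant_on_def by auto
    then have "Ys \<mu>1 pi = Ys 0 pi" using Fc_real by (metis of_real_eq_iff)
    then show False using spec_iff m1 Ys_pos_nonpos[of 0] by simp
  qed
  have fin: "finite {z \<in> cball 0 \<bar>M\<bar>. Fc z = 0}"
    by (rule holomorphic_compact_finite_zeros[OF Fc_holo open_UNIV connected_UNIV compact_cball _ nc]) auto
  have "{\<mu> \<in> sl_spec r. \<mu> \<le> M} \<subseteq> Re ` {z \<in> cball 0 \<bar>M\<bar>. Fc z = 0}"
  proof
    fix \<mu> assume m: "\<mu> \<in> {\<mu> \<in> sl_spec r. \<mu> \<le> M}"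
    then have "\<mu> > 0" "\<mu> \<le> M" "Ys \<mu> pi = 0" using spec_pos spec_iff by auto
    then have "of_real \<mu> \<in> {z \<in> cball 0 \<bar>M\<bar>. Fc z = 0}" using Fc_real by auto
    then show "\<mu> \<in> Re ` {z \<in> cball 0 \<bar>M\<bar>. Fc z = 0}" by (metis Re_complex_of_real imageI)
  qed
  then show ?thesis using finite_subset fin by blast
next
  case True
  then show ?thesis by (simp only:) simp
qed

end

lemma log_deriv:
  fixes h G :: "real \<Rightarrow> complex"
  assumes x: "x \<in> S" and cG: "continuous (at x within S) G"
    and e: "\<And>t. t \<in> S \<Longrightarrow> h t = exp (G t)"
    and dh: "(h has_vector_derivative h') (at x within S)"
  shows "(G has_vector_derivative h' / h x) (at x within S)"
proof -
  have hx: "h x \<noteq> 0" using e[OF x] by simp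
  obtain d where d: "d > 0" "\<And>t. t \<in> S \<Longrightarrow> dist t x < d \<Longrightarrow> dist (G t) (G x) < 1"
    using cG unfolding continuous_within_eps_delta by (meson zero_less_one)
  have eq: "G x + Ln (h t / h x) = G t" if t: "t \<in> S" "dist t x < d" for t
  proof -
    define w where "w = G t - G x"
    have "norm w < 1" using d(2)[OF t] by (simp add: w_def dist_norm)
    then have "\<bar>Im w\<bar> < 1" using abs_Im_le_cmod[of w] by linarith
    then have im: "- pi < Im w" "Im w \<le> pi" using pi_gt3 by linarith+
    have "h t / h x = exp w" using e[OF t(1)] e[OF x] by (simp add: w_def exp_diff)
    then have "Ln (h t / h x) = w" using Ln_exp[OF im] by simp
    then show ?thesis by (simp add: w_def)
  qed
  have dq: "((\<lambda>t. h t / h x) has_vector_derivative h' / h x) (at x within S)"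
    using has_vector_derivative_mult_left[OF dh, of "inverse (h x)"]
    by (simp add: divide_inverse mult.commute)
  have "(Ln has_field_derivative inverse 1) (at ((\<lambda>t. h t / h x) x))"
    using hx has_field_derivative_Ln[of 1] by (simp add: nonpos_Reals_def)
  then have dL: "(Ln has_field_derivative inverse 1) (at ((\<lambda>t. h t / h x) x) within (\<lambda>t. h t / h x) ` S)"
    by (rule has_field_derivative_at_within)
  have "((Ln \<circ> (\<lambda>t. h t / h x)) has_vector_derivative (h' / h x) * inverse 1) (at x within S)"
    by (rule field_vector_diff_chain_within[OF dq dL])
  then have "((\<lambda>t. G x + Ln (h t / h x)) has_vector_derivative h' / h x) (at x within S)"
    using has_vector_derivative_add[OF has_vector_derivative_const[of "G x"]] by (simp add: o_def)
  then show ?thesis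
    by (rule has_vector_derivative_transform_within[OF _ d(1) x]) (use eq in auto)
qed

lemma ratio_bnd:
  fixes P Q r K s :: real
  assumes "P \<ge> 0" "Q \<ge> 0" "P + Q > 0" "r > 0" "r \<le> K" "1 / r \<le> K" "s \<ge> 0"
  shows "- s * K \<le> - s * (r * P + Q / r) / (P + Q)" "- s * (r * P + Q / r) / (P + Q) \<le> - s / K"
proof -
  have K0: "K > 0" using assms by linarith
  have r1: "1 / K \<le> r" using assms K0 by (simp add: field_simps)
  have r2: "1 / K \<le> 1 / r" using assms K0 by (simp add: field_simps)
  have lo: "(P + Q) / K \<le> r * P + Q / r"
  proof -
    have "P / K \<le> r * P" using mult_right_mono[OF r1 assms(1)] by simp
    moreover have "Q / K \<le> Q / r" using mult_right_mono[OF r2 assms(2)] by simp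
    ultimately show ?thesis by (simp add: add_divide_distrib)
  qed
  have hi: "r * P + Q / r \<le> K * (P + Q)"
  proof -
    have "r * P \<le> K * P" using mult_right_mono[OF assms(5) assms(1)] by simp
    moreover have "Q / r \<le> K * Q" using mult_right_mono[OF assms(6) assms(2)] by simp
    ultimately show ?thesis by (simp add: distrib_left)
  qed
  have q1: "1 / K \<le> (r * P + Q / r) / (P + Q)" using lo assms(3) K0 by (simp add: field_simps)
  have q2: "(r * P + Q / r) / (P + Q) \<le> K" using hi assms(3) by (simp add: field_simps)
  show "- s * K \<le> - s * (r * P + Q / r) / (P + Q)"
    using mult_left_mono[OF q2 assms(7)] by simp
  show "- s * (r * P + Q / r) / (P + Q) \<le> - s / K"
    using mult_left_mono[OF q1 assms(7)] by simp
qed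

context slp begin

lemma YW_cont:
  assumes M: "M \<ge> 0"
  shows "continuous_on ({0..pi} \<times> {-M..M}) (\<lambda>p. Ys (snd p) (fst p))"
    and "continuous_on ({0..pi} \<times> {-M..M}) (\<lambda>p. Ws (snd p) (fst p))"
proof -
  let ?R = "{0..pi} \<times> {-M..M}"
  have ca: "continuous_on ?R (\<lambda>p. (- snd p) ^ j * aa j (fst p))" for j
  proof -
    have "continuous_on ?R (\<lambda>p. aa j (fst p))"
      by (rule continuous_on_compose2[OF aa_cont continuous_on_fst]) auto
    then show ?thesis by (intro continuous_intros)
  qed
  have cb: "continuous_on ?R (\<lambda>p. (- snd p) ^ j * bb j (fst p))" for j
  proof -
    have "continuous_on ?R (\<lambda>p. bb j (fst p))"
      by (rule continuous_on_compose2[OF bb_cont continuous_on_fst]) auto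
    then show ?thesis by (intro continuous_intros)
  qed
  have ula: "uniform_limit ?R (\<lambda>n p. \<Sum>i<n. (- snd p) ^ i * aa i (fst p)) (\<lambda>p. \<Sum>i. (- snd p) ^ i * aa i (fst p)) sequentially"
    by (rule Weierstrass_m_test[OF _ summ_aa[OF M]], rule aa_term_bnd) auto
  have ulb: "uniform_limit ?R (\<lambda>n p. \<Sum>i<n. (- snd p) ^ i * bb i (fst p)) (\<lambda>p. \<Sum>i. (- snd p) ^ i * bb i (fst p)) sequentially"
    by (rule Weierstrass_m_test[OF _ summ_bb[OF M]], rule bb_term_bnd) auto
  show "continuous_on ?R (\<lambda>p. Ys (snd p) (fst p))"
    unfolding Ys_def by (rule uniform_limit_theorem[OF _ ula]) (auto intro!: always_eventually continuous_on_sum ca)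
  show "continuous_on ?R (\<lambda>p. Ws (snd p) (fst p))"
    unfolding Ws_def by (rule uniform_limit_theorem[OF _ ulb]) (auto intro!: always_eventually continuous_on_sum cb)
qed

definition Zf :: "real \<Rightarrow> real \<Rightarrow> complex" where
  "Zf \<mu> x = complex_of_real (sqrt \<mu> * Ys \<mu> x) + \<i> * complex_of_real (Ws \<mu> x)"
definition Zd :: "real \<Rightarrow> real \<Rightarrow> complex" where
  "Zd \<mu> x = complex_of_real (sqrt \<mu> * (Ws \<mu> x / r x)) + \<i> * complex_of_real (- \<mu> * r x * Ys \<mu> x)"

lemma Zf_Re: "Re (Zf \<mu> x) = sqrt \<mu> * Ys \<mu> x" and Zf_Im: "Im (Zf \<mu> x) = Ws \<mu> x"
  by (simp_all add: Zf_def)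
lemma Zd_Re: "Re (Zd \<mu> x) = sqrt \<mu> * (Ws \<mu> x / r x)" and Zd_Im: "Im (Zd \<mu> x) = - \<mu> * r x * Ys \<mu> x"
  by (simp_all add: Zd_def)

lemma Zf_nz: "x \<in> {0..pi} \<Longrightarrow> \<mu> \<ge> 1 \<Longrightarrow> Zf \<mu> x \<noteq> 0"
proof
  assume x: "x \<in> {0..pi}" and m: "\<mu> \<ge> 1" and z: "Zf \<mu> x = 0"
  have "sqrt \<mu> * Ys \<mu> x = 0" "Ws \<mu> x = 0" using arg_cong[OF z, of Re] arg_cong[OF z, of Im] by (simp_all add: Zf_Re Zf_Im)
  then show False using YW_nonzero[OF x] m by auto
qed

lemma Zf_der: "x \<in> {0..pi} \<Longrightarrow> ((Zf \<mu>) has_vector_derivative Zd \<mu> x) (at x within {0..pi})"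
  unfolding has_vector_derivative_complex_iff Zf_Re Zf_Im Zd_Re Zd_Im
  using Ys_der Ws_der by (auto intro!: derivative_eq_intros)

lemma Zf_cont: "M \<ge> 1 \<Longrightarrow> continuous_on ({0..pi} \<times> {1..M}) (\<lambda>p. Zf (snd p) (fst p))"
proof -
  assume M: "M \<ge> 1"
  have sub: "{0..pi} \<times> {1..M} \<subseteq> {0..pi} \<times> {-M..M}" using M by auto
  have "continuous_on ({0..pi} \<times> {1..M}) (\<lambda>p. Ys (snd p) (fst p))" "continuous_on ({0..pi} \<times> {1..M}) (\<lambda>p. Ws (snd p) (fst p))"
    using continuous_on_subset[OF YW_cont(1) sub] continuous_on_subset[OF YW_cont(2) sub] M by auto
  then show ?thesis unfolding Zf_def by (intro continuous_intros) auto
qed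

lemma dtheta_bnd:
  assumes x: "x \<in> {0..pi}" and m: "\<mu> \<ge> 1"
  shows "- sqrt \<mu> * K \<le> Im (Zd \<mu> x / Zf \<mu> x)" "Im (Zd \<mu> x / Zf \<mu> x) \<le> - sqrt \<mu> / K"
proof -
  define s where "s = sqrt \<mu>"
  define P where "P = \<mu> * (Ys \<mu> x)^2"
  define Q where "Q = (Ws \<mu> x)^2"
  have s2: "s^2 = \<mu>" using m by (simp add: s_def)
  have s0: "s \<ge> 0" using m by (simp add: s_def)
  have PQ: "P \<ge> 0" "Q \<ge> 0" using m by (auto simp: P_def Q_def)
  have "P + Q > 0"
  proof -
    have "Ys \<mu> x \<noteq> 0 \<or> Ws \<mu> x \<noteq> 0" using YW_nonzero[OF x] by auto
    then show ?thesis
    proof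
      assume "Ys \<mu> x \<noteq> 0"
      then have "P > 0" using m unfolding P_def by (intro mult_pos_pos) auto
      then show ?thesis using PQ by linarith
    next
      assume "Ws \<mu> x \<noteq> 0"
      then have "Q > 0" unfolding Q_def by auto
      then show ?thesis using PQ by linarith
    qed
  qed
  have rx: "r x > 0" "r x \<le> K" "1 / r x \<le> K" using r_pos[OF x] K(2,3)[OF x] by auto
  have eq: "Im (Zd \<mu> x / Zf \<mu> x) = - s * (r x * P + Q / r x) / (P + Q)"
  proof -
    have "Im (Zd \<mu> x / Zf \<mu> x) = ((- \<mu> * r x * Ys \<mu> x) * (s * Ys \<mu> x) - (s * (Ws \<mu> x / r x)) * Ws \<mu> x) / ((s * Ys \<mu> x)^2 + (Ws \<mu> x)^2)"
      by (simp add: Im_divide Zf_Re Zf_Im Zd_Re Zd_Im s_def)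
    also have "(s * Ys \<mu> x)^2 + (Ws \<mu> x)^2 = P + Q" by (simp add: P_def Q_def power_mult_distrib s2)
    also have "(- \<mu> * r x * Ys \<mu> x) * (s * Ys \<mu> x) - (s * (Ws \<mu> x / r x)) * Ws \<mu> x = - s * (r x * P + Q / r x)"
      by (simp add: P_def Q_def power2_eq_square algebra_simps)
    finally show ?thesis by simp
  qed
  show "- sqrt \<mu> * K \<le> Im (Zd \<mu> x / Zf \<mu> x)" "Im (Zd \<mu> x / Zf \<mu> x) \<le> - sqrt \<mu> / K"
    using ratio_bnd[OF PQ \<open>P + Q > 0\<close> rx s0] unfolding eq s_def by auto
qed

lemma theta_der:
  assumes M: "M \<ge> 1" and gc: "continuous_on ({0..pi} \<times> {1..M}) g"
    and ge: "\<And>p. p \<in> {0..pi} \<times> {1..M} \<Longrightarrow> Zf (snd p) (fst p) = exp (g p)"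
    and x: "x \<in> {0..pi}" and m: "\<mu> \<in> {1..M}"
  shows "((\<lambda>x. Im (g (x, \<mu>))) has_real_derivative Im (Zd \<mu> x / Zf \<mu> x)) (at x within {0..pi})"
proof -
  have c: "continuous_on {0..pi} (\<lambda>x. g (x, \<mu>))"
    by (rule continuous_on_compose2[OF gc]) (use m in \<open>auto intro!: continuous_intros\<close>)
  have "((\<lambda>x. g (x, \<mu>)) has_vector_derivative Zd \<mu> x / Zf \<mu> x) (at x within {0..pi})"
  proof (rule log_deriv[OF x])
    show "continuous (at x within {0..pi}) (\<lambda>x. g (x, \<mu>))" using c x continuous_on_eq_continuous_within by blast
    show "\<And>t. t \<in> {0..pi} \<Longrightarrow> Zf \<mu> t = exp (g (t, \<mu>))" using ge m by auto
    show "(Zf \<mu> has_vector_derivative Zd \<mu> x) (at x within {0..pi})" by (rule Zf_der[OF x])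
  qed
  then show ?thesis by (rule has_field_derivative_Im)
qed

lemma many_eigs: "\<exists>A \<subseteq> sl_spec r. finite A \<and> card A \<ge> N"
proof -
  have K0: "K > 0" using K(1) by linarith
  define M where "M = (K * (K + real N + 2))^2 + 1"
  have M1: "M \<ge> 1" by (simp add: M_def)
  have "K * (K + real N + 2) \<le> sqrt M"
  proof -
    have "K * (K + real N + 2) = sqrt ((K * (K + real N + 2))^2)" using K0 by simp
    also have "\<dots> \<le> sqrt M" unfolding M_def by (rule real_sqrt_le_mono) simp
    finally show ?thesis .
  qed
  then have sqM: "K + real N + 2 \<le> sqrt M / K" using K0 by (simp add: field_simps)
  let ?R = "{0..pi} \<times> {1..M}"
  have cvx: "convex ?R" by (intro convex_Times convex_real_interval)
  obtain g where gc: "continuous_on ?R g" and ge': "\<And>p. p \<in> ?R \<Longrightarrow> Zf (snd p) (fst p) = exp (g p)"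
    using continuous_logarithm_on_contractible[OF Zf_cont[OF M1] convex_imp_contractible[OF cvx]] Zf_nz
    by (metis mem_Times_iff atLeastAtMost_iff)
  define th where "th x \<mu> = Im (g (x, \<mu>))" for x \<mu>
  have der: "((\<lambda>x. th x \<mu>) has_real_derivative Im (Zd \<mu> x / Zf \<mu> x)) (at x within {0..pi})"
    if "x \<in> {0..pi}" "\<mu> \<in> {1..M}" for x \<mu>
    unfolding th_def by (rule theta_der[OF M1 gc ge' that])
  have up: "th pi \<mu> \<le> th 0 \<mu> - pi * sqrt \<mu> / K" if m: "\<mu> \<in> {1..M}" for \<mu>
  proof -
    have "- th 0 \<mu> - sqrt \<mu> * 0 / K \<le> - th pi \<mu> - sqrt \<mu> * pi / K"
    proof (rule incr_within[where f="\<lambda>x. - th x \<mu> - sqrt \<mu> * x / K" and f'="\<lambda>x. - Im (Zd \<mu> x / Zf \<mu> x) - sqrt \<mu> / K"])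
      fix x :: real assume x: "x \<in> {0..pi}"
      show "((\<lambda>x. - th x \<mu> - sqrt \<mu> * x / K) has_real_derivative - Im (Zd \<mu> x / Zf \<mu> x) - sqrt \<mu> / K) (at x within {0..pi})"
        using der[OF x m] K0 by (auto intro!: derivative_eq_intros)
      show "0 \<le> - Im (Zd \<mu> x / Zf \<mu> x) - sqrt \<mu> / K" using dtheta_bnd(2)[OF x, of \<mu>] m by auto
    qed auto
    then show ?thesis by (simp add: mult.commute)
  qed
  have lo: "th 0 \<mu> - pi * sqrt \<mu> * K \<le> th pi \<mu>" if m: "\<mu> \<in> {1..M}" for \<mu>
  proof -
    have "th 0 \<mu> + sqrt \<mu> * K * 0 \<le> th pi \<mu> + sqrt \<mu> * K * pi"
    proof (rule incr_within[where f="\<lambda>x. th x \<mu> + sqrt \<mu> * K * x" and f'="\<lambda>x. Im (Zd \<mu> x / Zf \<mu> x) + sqrt \<mu> * K"])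
      fix x :: real assume x: "x \<in> {0..pi}"
      show "((\<lambda>x. th x \<mu> + sqrt \<mu> * K * x) has_real_derivative Im (Zd \<mu> x / Zf \<mu> x) + sqrt \<mu> * K) (at x within {0..pi})"
        using der[OF x m] by (auto intro!: derivative_eq_intros)
      show "0 \<le> Im (Zd \<mu> x / Zf \<mu> x) + sqrt \<mu> * K" using dtheta_bnd(1)[OF x, of \<mu>] m by auto
    qed auto
    then show ?thesis by (simp add: algebra_simps)
  qed
  have g0: "exp (g (0, \<mu>)) = \<i>" if "\<mu> \<in> {1..M}" for \<mu>
    using ge'[of "(0, \<mu>)"] that by (simp add: Zf_def Ys_0 Ws_0)
  have gc0: "continuous_on {1..M} (\<lambda>\<mu>. g (0, \<mu>))"
    by (rule continuous_on_compose2[OF gc]) (auto intro!: continuous_intros)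
  have "(\<lambda>\<mu>. g (0, \<mu>)) constant_on {1..M}"
  proof (rule continuous_discrete_range_constant[OF connected_Icc gc0])
    fix x assume x: "x \<in> {1..M}"
    show "\<exists>e>0. \<forall>y. y \<in> {1..M} \<and> g (0, y) \<noteq> g (0, x) \<longrightarrow> e \<le> norm (g (0, y) - g (0, x))"
    proof (intro exI[of _ 1] conjI allI impI)
      fix y assume y: "y \<in> {1..M} \<and> g (0, y) \<noteq> g (0, x)"
      then have "exp (g (0, y)) = exp (g (0, x))" using g0 x by auto
      then obtain n :: int where n: "g (0, y) = g (0, x) + (of_int (2 * n) * pi) * \<i>"
        unfolding exp_eq by blast
      with y have "n \<noteq> 0" by auto
      have "(1::int) \<le> \<bar>2 * n\<bar>" using \<open>n \<noteq> 0\<close> by auto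
      then have a: "(1::real) \<le> \<bar>real_of_int (2 * n)\<bar>" by (metis of_int_1_le_iff of_int_abs)
      have "1 * 1 \<le> \<bar>real_of_int (2 * n)\<bar> * pi" by (rule mult_mono) (use a pi_gt3 in auto)
      then have "1 \<le> \<bar>real_of_int (2 * n)\<bar> * pi" by simp
      also have "\<dots> = norm (g (0, y) - g (0, x))" using n by (simp add: norm_mult)
      finally show "1 \<le> norm (g (0, y) - g (0, x))" .
    qed simp
  qed
  then have th0: "th 0 \<mu> = th 0 1" if "\<mu> \<in> {1..M}" for \<mu>
    using that M1 unfolding constant_on_def th_def by fastforce
  define \<Phi> where "\<Phi> \<mu> = th pi \<mu>" for \<mu>
  have \<Phi>c: "continuous_on {1..M} \<Phi>"
    unfolding \<Phi>_def th_def by (rule continuous_on_compose2[OF continuous_on_Im[OF gc]]) (auto intro!: continuous_intros)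
  have \<Phi>M: "\<Phi> M \<le> th 0 1 - pi * sqrt M / K" using up[of M] th0[of M] M1 by (simp add: \<Phi>_def)
  have \<Phi>1: "\<Phi> 1 \<ge> th 0 1 - pi * K" using lo[of 1] M1 by (simp add: \<Phi>_def)
  have gap: "\<Phi> 1 - \<Phi> M \<ge> pi * (real N + 2)"
  proof -
    have "pi * (real N + 2) \<le> pi * (sqrt M / K - K)" using sqM by (intro mult_left_mono) auto
    also have "\<dots> = pi * sqrt M / K - pi * K" by (simp add: algebra_simps)
    finally show ?thesis using \<Phi>M \<Phi>1 by linarith
  qed
  define k0 where "k0 = \<lceil>(\<Phi> M - pi / 2) / pi\<rceil>"
  define v where "v i = pi / 2 + (real_of_int k0 + real i) * pi" for i :: nat
  have k0a: "(\<Phi> M - pi / 2) / pi \<le> real_of_int k0" unfolding k0_def by (rule le_of_int_ceiling)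
  have k0b: "real_of_int k0 < (\<Phi> M - pi / 2) / pi + 1" unfolding k0_def by linarith
  have k0a': "\<Phi> M - pi / 2 \<le> real_of_int k0 * pi" using k0a by (simp add: field_simps)
  have k0b': "real_of_int k0 * pi < \<Phi> M - pi / 2 + pi" using k0b by (simp add: field_simps)
  have vi: "\<Phi> M \<le> v i \<and> v i \<le> \<Phi> 1" if "i \<le> N" for i
  proof
    have ve: "v i = pi / 2 + real_of_int k0 * pi + real i * pi" by (simp add: v_def algebra_simps)
    have "0 \<le> real i * pi" by simp
    then show "\<Phi> M \<le> v i" using k0a' ve by linarith
    have "real i * pi \<le> real N * pi" using that by (intro mult_right_mono) auto
    moreover have "real N * pi + pi + pi \<le> pi * (real N + 2)" by (simp add: algebra_simps)
    ultimately show "v i \<le> \<Phi> 1" using k0b' gap ve pi_gt_zero by linarith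
  qed
  have "\<forall>i. \<exists>\<mu>. i \<le> N \<longrightarrow> \<mu> \<in> {1..M} \<and> \<Phi> \<mu> = v i"
  proof
    fix i show "\<exists>\<mu>. i \<le> N \<longrightarrow> \<mu> \<in> {1..M} \<and> \<Phi> \<mu> = v i"
    proof (cases "i \<le> N")
      case True
      from IVT2'[of \<Phi> M "v i" 1, OF _ _ M1 \<Phi>c] vi[OF True] show ?thesis by auto
    qed auto
  qed
  then obtain \<mu>s where \<mu>s: "\<And>i. i \<le> N \<Longrightarrow> \<mu>s i \<in> {1..M} \<and> \<Phi> (\<mu>s i) = v i" by metis
  have cosv: "cos (v i) = 0" for i
  proof -
    have "sin ((real_of_int k0 + real i) * pi) = 0"
      by (subst sin_times_pi_eq_0) (auto intro: Ints_add)
    then show ?thesis unfolding v_def by (simp add: cos_add)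
  qed
  have inspec: "\<mu>s i \<in> sl_spec r" if "i \<le> N" for i
  proof -
    have m: "\<mu>s i \<in> {1..M}" and ph: "\<Phi> (\<mu>s i) = v i" using \<mu>s[OF that] by auto
    have "Re (Zf (\<mu>s i) pi) = Re (exp (g (pi, \<mu>s i)))" using ge'[of "(pi, \<mu>s i)"] m by auto
    also have "\<dots> = exp (Re (g (pi, \<mu>s i))) * cos (\<Phi> (\<mu>s i))" by (simp add: Re_exp \<Phi>_def th_def)
    also have "\<dots> = 0" using ph cosv by simp
    finally have "sqrt (\<mu>s i) * Ys (\<mu>s i) pi = 0" by (simp add: Zf_Re)
    then have "Ys (\<mu>s i) pi = 0" using m by auto
    then show ?thesis using spec_iff by auto
  qed
  have inj: "inj_on \<mu>s {..N}"
  proof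
    fix i j assume ij: "i \<in> {..N}" "j \<in> {..N}" "\<mu>s i = \<mu>s j"
    then have "v i = v j" using \<mu>s[of i] \<mu>s[of j] by auto
    then show "i = j" unfolding v_def by simp
  qed
  show ?thesis
  proof (intro exI[of _ "\<mu>s ` {..N}"] conjI)
    show "\<mu>s ` {..N} \<subseteq> sl_spec r" using inspec by auto
    show "finite (\<mu>s ` {..N})" by simp
    show "N \<le> card (\<mu>s ` {..N})" using card_image[OF inj] by simp
  qed
qed

lemma spec_infinite: "infinite (sl_spec r)"
proof
  assume f: "finite (sl_spec r)"
  obtain A where A: "A \<subseteq> sl_spec r" "finite A" "card A \<ge> Suc (card (sl_spec r))"
    using many_eigs by blast
  have "card A \<le> card (sl_spec r)" by (rule card_mono[OF f A(1)])
  with A(3) show False by simp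
qed

end

context slp begin

lemma below_finite: "finite {\<nu> \<in> sl_spec r. \<nu> < \<mu>}"
  by (rule finite_subset[OF _ spec_finite_below[of \<mu>]]) auto

lemma eig_exists: "\<exists>\<mu>. \<mu> \<in> sl_spec r \<and> card {\<nu> \<in> sl_spec r. \<nu> < \<mu>} = m"
proof (induction m)
  case 0
  obtain \<mu>0 where m0: "\<mu>0 \<in> sl_spec r" using spec_infinite by (metis finite.emptyI ex_in_conv)
  let ?S = "{\<nu> \<in> sl_spec r. \<nu> \<le> \<mu>0}"
  have fS: "finite ?S" by (rule spec_finite_below)
  have neS: "?S \<noteq> {}" using m0 by auto
  define \<mu>1 where "\<mu>1 = Min ?S"
  have m1: "\<mu>1 \<in> ?S" unfolding \<mu>1_def using Min_in[OF fS neS] .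
  have E: "{\<nu> \<in> sl_spec r. \<nu> < \<mu>1} = {}"
  proof (rule ccontr)
    assume "{\<nu> \<in> sl_spec r. \<nu> < \<mu>1} \<noteq> {}"
    then obtain \<nu> where \<nu>: "\<nu> \<in> sl_spec r" "\<nu> < \<mu>1" by auto
    then have "\<nu> \<in> ?S" using m1 by auto
    then have "\<mu>1 \<le> \<nu>" unfolding \<mu>1_def using Min_le[OF fS] by auto
    with \<nu> show False by simp
  qed
  show ?case by (rule exI[of _ \<mu>1]) (use m1 in \<open>simp only: E card.empty\<close>, simp)
next
  case (Suc m)
  then obtain \<mu> where m: "\<mu> \<in> sl_spec r" "card {\<nu> \<in> sl_spec r. \<nu> < \<mu>} = m" by auto
  obtain \<nu>0 where n0: "\<nu>0 \<in> sl_spec r" "\<nu>0 > \<mu>"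
  proof -
    have "\<not> sl_spec r \<subseteq> {\<nu> \<in> sl_spec r. \<nu> \<le> \<mu>}"
      using spec_infinite spec_finite_below[of \<mu>] finite_subset by blast
    then obtain \<nu> where "\<nu> \<in> sl_spec r" "\<not> \<nu> \<le> \<mu>" by blast
    then show ?thesis using that by auto
  qed
  let ?S = "{\<nu> \<in> sl_spec r. \<mu> < \<nu> \<and> \<nu> \<le> \<nu>0}"
  have fS: "finite ?S" by (rule finite_subset[OF _ spec_finite_below[of \<nu>0]]) auto
  have neS: "?S \<noteq> {}" using n0 by auto
  define \<mu>1 where "\<mu>1 = Min ?S"
  have m1: "\<mu>1 \<in> ?S" unfolding \<mu>1_def using Min_in[OF fS neS] .
  have eq: "{\<nu> \<in> sl_spec r. \<nu> < \<mu>1} = insert \<mu> {\<nu> \<in> sl_spec r. \<nu> < \<mu>}"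
  proof (intro equalityI subsetI)
    fix \<nu> assume \<nu>: "\<nu> \<in> {\<nu> \<in> sl_spec r. \<nu> < \<mu>1}"
    show "\<nu> \<in> insert \<mu> {\<nu> \<in> sl_spec r. \<nu> < \<mu>}"
    proof (rule ccontr)
      assume "\<nu> \<notin> insert \<mu> {\<nu> \<in> sl_spec r. \<nu> < \<mu>}"
      then have "\<nu> \<in> ?S" using \<nu> m1 by auto
      then have "\<mu>1 \<le> \<nu>" unfolding \<mu>1_def using Min_le[OF fS] by auto
      with \<nu> show False by simp
    qed
  qed (use m m1 in auto)
  have "card {\<nu> \<in> sl_spec r. \<nu> < \<mu>1} = Suc m"
    unfolding eq using below_finite[of \<mu>] m(2) by (subst card_insert_disjoint) auto
  then show ?case using m1 by (intro exI[of _ \<mu>1]) auto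
qed

lemma eig_unique:
  assumes "\<mu>1 \<in> sl_spec r" "\<mu>2 \<in> sl_spec r"
    and "card {\<nu> \<in> sl_spec r. \<nu> < \<mu>1} = card {\<nu> \<in> sl_spec r. \<nu> < \<mu>2}"
  shows "\<mu>1 = \<mu>2"
proof (rule ccontr)
  assume ne: "\<mu>1 \<noteq> \<mu>2"
  have lt: "card {\<nu> \<in> sl_spec r. \<nu> < a} < card {\<nu> \<in> sl_spec r. \<nu> < b}"
    if "a \<in> sl_spec r" "a < b" for a b
    by (rule psubset_card_mono[OF below_finite]) (use that in auto)
  show False
  proof (cases "\<mu>1 < \<mu>2")
    case True then show ?thesis using lt[OF assms(1)] assms(3) by force
  next
    case False then have "\<mu>2 < \<mu>1" using ne by auto
    then show ?thesis using lt[OF assms(2)] assms(3) by force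
  qed
qed

lemma sl_eig_props:
  assumes "n \<ge> 1"
  shows "sl_eig r n \<in> sl_spec r" "card {\<nu> \<in> sl_spec r. \<nu> < sl_eig r n} = n - 1"
proof -
  have "\<exists>!\<mu>. \<mu> \<in> sl_spec r \<and> finite {\<nu> \<in> sl_spec r. \<nu> < \<mu>} \<and> card {\<nu> \<in> sl_spec r. \<nu> < \<mu>} = n - 1"
  proof -
    obtain \<mu> where "\<mu> \<in> sl_spec r" "card {\<nu> \<in> sl_spec r. \<nu> < \<mu>} = n - 1" using eig_exists by blast
    then show ?thesis
      by (intro ex1I[of _ \<mu>]) (auto intro: eig_unique below_finite)
  qed
  from theI'[OF this] show "sl_eig r n \<in> sl_spec r" "card {\<nu> \<in> sl_spec r. \<nu> < sl_eig r n} = n - 1"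
    unfolding sl_eig_def by auto
qed

lemma sl_eig_inj: "n \<ge> 1 \<Longrightarrow> m \<ge> 1 \<Longrightarrow> sl_eig r n = sl_eig r m \<Longrightarrow> n = m"
  using sl_eig_props[of n] sl_eig_props[of m] by auto

lemma eigenfun_scale: "sl_eigenfun r \<mu> \<phi> \<Longrightarrow> c \<noteq> 0 \<Longrightarrow> sl_eigenfun r \<mu> (\<lambda>x. c * \<phi> x)"
proof -
  assume e: "sl_eigenfun r \<mu> \<phi>" and c: "c \<noteq> 0"
  obtain \<phi>' where d: "\<forall>x\<in>{0..pi}. (\<phi> has_real_derivative \<phi>' x) (at x within {0..pi}) \<and>
        ((\<lambda>y. r y * \<phi>' y) has_real_derivative (- \<mu> * r x * \<phi> x)) (at x within {0..pi})"
    and b: "\<phi> 0 = 0" "\<phi> pi = 0" and nz: "\<exists>x\<in>{0..pi}. \<phi> x \<noteq> 0"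
    using e unfolding sl_eigenfun_def by blast
  show ?thesis unfolding sl_eigenfun_def
  proof (intro conjI exI[of _ "\<lambda>x. c * \<phi>' x"] ballI)
    fix x :: real assume x: "x \<in> {0..pi}"
    show "((\<lambda>x. c * \<phi> x) has_real_derivative c * \<phi>' x) (at x within {0..pi})"
      using d x by (auto intro!: derivative_eq_intros)
    have "((\<lambda>y. c * (r y * \<phi>' y)) has_real_derivative c * (- \<mu> * r x * \<phi> x)) (at x within {0..pi})"
      using d x by (intro DERIV_cmult) auto
    then show "((\<lambda>y. r y * (c * \<phi>' y)) has_real_derivative - \<mu> * r x * (c * \<phi> x)) (at x within {0..pi})"
      by (simp add: algebra_simps)
  qed (use b nz c in auto)
qed

lemma eigenfun_cont: "sl_eigenfun r \<mu> \<phi> \<Longrightarrow> continuous_on {0..pi} \<phi>"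
  unfolding sl_eigenfun_def
  by (meson DERIV_continuous continuous_on_eq_continuous_within)

lemma eigen_norm_pos:
  assumes "sl_eigenfun r \<mu> \<phi>"
  shows "integral {0..pi} (\<lambda>x. r x * (\<phi> x)\<^sup>2) > 0"
proof -
  have c: "continuous_on {0..pi} (\<lambda>x. r x * (\<phi> x)\<^sup>2)"
    using eigenfun_cont[OF assms] by (intro continuous_intros r_cont)
  obtain x0 where x0: "x0 \<in> {0..pi}" "\<phi> x0 \<noteq> 0" using assms unfolding sl_eigenfun_def by auto
  have nn: "0 \<le> r x * (\<phi> x)\<^sup>2" if "x \<in> {0..pi}" for x using r_pos[OF that] by auto
  have "0 \<le> integral {0..pi} (\<lambda>x. r x * (\<phi> x)\<^sup>2)"
    by (rule integral_nonneg[OF integrable_continuous_interval[OF c]]) (use nn in auto)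
  moreover have "integral {0..pi} (\<lambda>x. r x * (\<phi> x)\<^sup>2) \<noteq> 0"
  proof
    assume z: "integral {0..pi} (\<lambda>x. r x * (\<phi> x)\<^sup>2) = 0"
    have "((\<lambda>x. r x * (\<phi> x)\<^sup>2) has_integral 0) (cbox 0 pi)"
      using integrable_integral[OF integrable_continuous_interval[OF c]] z by simp
    moreover have "continuous_on (cbox 0 pi) (\<lambda>x. r x * (\<phi> x)\<^sup>2)" using c by (simp only: cbox_interval)
    moreover have "\<And>x. x \<in> box 0 pi \<Longrightarrow> 0 \<le> r x * (\<phi> x)\<^sup>2" using nn by (simp add: box_real)
    moreover have "box 0 pi \<noteq> {}" using pi_gt_zero by (metis box_real(1) greaterThanLessThan_empty_iff not_le)
    moreover have "x0 \<in> cbox 0 pi" using x0(1) by (simp only: cbox_interval)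
    ultimately have "r x0 * (\<phi> x0)\<^sup>2 = 0"
      by (intro has_integral_0_cbox_imp_0[of 0 pi "\<lambda>x. r x * (\<phi> x)\<^sup>2" x0])
    then show False using r_pos[OF x0(1)] x0(2) by simp
  qed
  ultimately show ?thesis by simp
qed

lemma efun_props:
  assumes n: "n \<ge> 1"
  shows "sl_eigenfun r (sl_eig r n) (sl_efun r n)"
    "integral {0..pi} (\<lambda>x. r x * (sl_efun r n x)\<^sup>2) = 1"
proof -
  obtain \<phi> where e: "sl_eigenfun r (sl_eig r n) \<phi>" using sl_eig_props(1)[OF n] unfolding sl_spec_def by auto
  define I where "I = integral {0..pi} (\<lambda>x. r x * (\<phi> x)\<^sup>2)"
  have I: "I > 0" unfolding I_def by (rule eigen_norm_pos[OF e])
  define \<psi> where "\<psi> x = (1 / sqrt I) * \<phi> x" for x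
  have e2: "sl_eigenfun r (sl_eig r n) \<psi>" unfolding \<psi>_def by (rule eigenfun_scale[OF e]) (use I in auto)
  have pt: "r x * (\<psi> x)\<^sup>2 = (1 / I) * (r x * (\<phi> x)\<^sup>2)" for x
  proof -
    have "(1 / sqrt I)\<^sup>2 = 1 / I" using I by (simp add: power_divide)
    then show ?thesis unfolding \<psi>_def power_mult_distrib by simp
  qed
  have "integral {0..pi} (\<lambda>x. r x * (\<psi> x)\<^sup>2) = integral {0..pi} (\<lambda>x. (1 / I) * (r x * (\<phi> x)\<^sup>2))"
    by (simp only: pt)
  also have "\<dots> = (1 / I) * I" unfolding I_def by (rule integral_mult_right)
  also have "\<dots> = 1" using I by simp
  finally have "\<exists>\<psi>. sl_eigenfun r (sl_eig r n) \<psi> \<and> integral {0..pi} (\<lambda>x. r x * (\<psi> x)\<^sup>2) = 1" using e2 by blast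
  from someI_ex[OF this] show "sl_eigenfun r (sl_eig r n) (sl_efun r n)"
    "integral {0..pi} (\<lambda>x. r x * (sl_efun r n x)\<^sup>2) = 1" unfolding sl_efun_def by auto
qed

lemma eigen_orth:
  assumes e1: "sl_eigenfun r \<mu> \<phi>" and e2: "sl_eigenfun r \<nu> \<psi>" and ne: "\<mu> \<noteq> \<nu>"
  shows "((\<lambda>x. r x * \<phi> x * \<psi> x) has_integral 0) {0..pi}"
proof -
  obtain \<phi>' where d1: "\<And>x. x \<in> {0..pi} \<Longrightarrow> (\<phi> has_real_derivative \<phi>' x) (at x within {0..pi}) \<and>
        ((\<lambda>y. r y * \<phi>' y) has_real_derivative (- \<mu> * r x * \<phi> x)) (at x within {0..pi})"
    and b1: "\<phi> 0 = 0" "\<phi> pi = 0"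
    using e1 unfolding sl_eigenfun_def by blast
  obtain \<psi>' where d2: "\<And>x. x \<in> {0..pi} \<Longrightarrow> (\<psi> has_real_derivative \<psi>' x) (at x within {0..pi}) \<and>
        ((\<lambda>y. r y * \<psi>' y) has_real_derivative (- \<nu> * r x * \<psi> x)) (at x within {0..pi})"
    and b2: "\<psi> 0 = 0" "\<psi> pi = 0"
    using e2 unfolding sl_eigenfun_def by blast
  define F where "F y = (r y * \<phi>' y) * \<psi> y - \<phi> y * (r y * \<psi>' y)" for y
  have dF: "(F has_vector_derivative ((\<nu> - \<mu>) * (r x * \<phi> x * \<psi> x))) (at x within {0..pi})"
    if x: "x \<in> {0..pi}" for x
  proof -
    have "(F has_real_derivative (r x * \<phi>' x * \<psi>' x + (- \<mu> * r x * \<phi> x) * \<psi> x)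
        - (\<phi> x * (- \<nu> * r x * \<psi> x) + \<phi>' x * (r x * \<psi>' x))) (at x within {0..pi})"
      unfolding F_def[abs_def]
      by (rule DERIV_diff[OF DERIV_mult'[OF conjunct2[OF d1[OF x]] conjunct1[OF d2[OF x]]]
          DERIV_mult'[OF conjunct1[OF d1[OF x]] conjunct2[OF d2[OF x]]]])
    moreover have "(r x * \<phi>' x * \<psi>' x + (- \<mu> * r x * \<phi> x) * \<psi> x)
        - (\<phi> x * (- \<nu> * r x * \<psi> x) + \<phi>' x * (r x * \<psi>' x)) = (\<nu> - \<mu>) * (r x * \<phi> x * \<psi> x)"
      by (simp add: algebra_simps)
    ultimately show ?thesis by (simp add: has_real_derivative_iff_has_vector_derivative)
  qed
  have "((\<lambda>x. (\<nu> - \<mu>) * (r x * \<phi> x * \<psi> x)) has_integral F pi - F 0) {0..pi}"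
    using dF by (intro fundamental_theorem_of_calculus) auto
  then have "((\<lambda>x. (\<nu> - \<mu>) * (r x * \<phi> x * \<psi> x)) has_integral 0) {0..pi}"
    by (simp add: F_def b1 b2)
  from has_integral_mult_right[OF this, of "1 / (\<nu> - \<mu>)"]
  have "((\<lambda>x. (1 / (\<nu> - \<mu>)) * ((\<nu> - \<mu>) * (r x * \<phi> x * \<psi> x))) has_integral 0) {0..pi}" by simp
  then show ?thesis using ne by simp
qed

end

lemma Omega_box: "Omega T = box (0,0) (T,pi)"
  unfolding Omega_def by (auto simp: box_def Basis_prod_def inner_prod_def)

lemma Omega_sub: "Omega T \<subseteq> cbox (0,0) (T,pi)"
  unfolding Omega_def by (auto simp: cbox_def Basis_prod_def inner_prod_def)

lemma Omega_sets: "Omega T \<in> sets lebesgue"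
  unfolding Omega_box by simp

lemma Omega_lmeas: "Omega T \<in> lmeasurable"
  unfolding Omega_box by simp

lemma cbox_sets: "cbox (0,0) (T,pi) \<in> sets lebesgue" by simp

lemma meas_cont:
  fixes B :: "real \<times> real \<Rightarrow> complex"
  assumes "continuous_on (cbox (0,0) (T,pi)) B"
  shows "(\<lambda>z. indicator (Omega T) z *\<^sub>R B z) \<in> borel_measurable lebesgue"
proof -
  have "B \<in> borel_measurable (lebesgue_on (Omega T))"
    by (rule continuous_imp_measurable_on_sets_lebesgue[OF continuous_on_subset[OF assms Omega_sub] Omega_sets])
  then show ?thesis using borel_measurable_restrict_space_iff[of "Omega T" lebesgue B] Omega_sets by simp
qed

lemma cont_int:
  fixes B :: "real \<times> real \<Rightarrow> 'b::euclidean_space"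
  assumes c: "continuous_on (cbox (0,0) (T,pi)) B"
  shows "set_integrable lebesgue (Omega T) B"
    "(LINT z:Omega T|lebesgue. B z) = integral (cbox (0,0) (T,pi)) B"
proof -
  have "B absolutely_integrable_on cbox (0,0) (T,pi)" by (rule absolutely_integrable_continuous[OF c])
  then show si: "set_integrable lebesgue (Omega T) B"
    by (rule set_integrable_subset[OF _ Omega_sets Omega_sub])
  have "(LINT z:Omega T|lebesgue. B z) = integral (Omega T) B" by (rule set_lebesgue_integral_eq_integral(2)[OF si])
  also have "\<dots> = integral (cbox (0,0) (T,pi)) B" unfolding Omega_box by (rule integral_open_interval)
  finally show "(LINT z:Omega T|lebesgue. B z) = integral (cbox (0,0) (T,pi)) B" .
qed

lemma prod_int:
  fixes f g :: "real \<Rightarrow> complex"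
  assumes f: "continuous_on {0..T} f" and g: "continuous_on {0..pi} g"
  shows "integral (cbox (0,0) (T,pi)) (\<lambda>z. f (fst z) * g (snd z)) = integral {0..T} f * integral {0..pi} g"
proof -
  have c: "continuous_on (cbox (0,0) (T,pi)) (\<lambda>z. f (fst z) * g (snd z))"
  proof (intro continuous_intros)
    show "continuous_on (cbox (0, 0) (T, pi)) (\<lambda>z. f (fst z))"
      by (rule continuous_on_compose2[OF f continuous_on_fst]) (auto simp: cbox_Pair_eq)
    show "continuous_on (cbox (0, 0) (T, pi)) (\<lambda>z. g (snd z))"
      by (rule continuous_on_compose2[OF g continuous_on_snd]) (auto simp: cbox_Pair_eq)
  qed
  have "integral (cbox (0,0) (T,pi)) (\<lambda>z. f (fst z) * g (snd z)) = integral (cbox 0 T) (\<lambda>t. integral (cbox 0 pi) (\<lambda>x. f t * g x))"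
    using integral_prod_continuous[OF c] by simp
  also have "\<dots> = integral {0..T} (\<lambda>t. f t * integral {0..pi} g)" by simp
  also have "\<dots> = integral {0..T} f * integral {0..pi} g" by simp
  finally show ?thesis .
qed
lemma tfun_cont: "continuous_on S (tfun T m)"
  unfolding tfun_def divide_inverse by (intro continuous_intros)

lemma tfun_prod: "T > 0 \<Longrightarrow> tfun T m' t * cnj (tfun T m t) = (1 / T) * exp (\<i> * of_real (2 * real_of_int (m' - m) * pi * t / T))"
proof -
  assume T: "T > 0"
  have "tfun T m' t * cnj (tfun T m t) = of_real (1 / sqrt T) * of_real (1 / sqrt T) *
      (exp (\<i> * of_real (2 * real_of_int m' * pi * t / T)) * exp (- (\<i> * of_real (2 * real_of_int m * pi * t / T))))"
    unfolding tfun_def by (simp add: exp_cnj)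
  also have "of_real (1 / sqrt T) * of_real (1 / sqrt T) = (of_real (1 / T) :: complex)"
    using T by (simp flip: of_real_mult)
  also have "exp (\<i> * of_real (2 * real_of_int m' * pi * t / T)) * exp (- (\<i> * of_real (2 * real_of_int m * pi * t / T)))
      = exp (\<i> * of_real (2 * real_of_int (m' - m) * pi * t / T))"
    by (simp flip: exp_add add: algebra_simps diff_divide_distrib)
  finally show ?thesis by simp
qed

lemma tfun_orth:
  assumes T: "T > 0"
  shows "integral {0..T} (\<lambda>t. tfun T m' t * cnj (tfun T m t)) = (if m' = m then 1 else 0)"
proof (cases "m' = m")
  case True
  have "integral {0..T} (\<lambda>t. tfun T m' t * cnj (tfun T m t)) = integral {0..T} (\<lambda>t. of_real (1 / T))"
    using T True by (simp add: tfun_prod)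
  also have "\<dots> = 1" using T by (simp add: scaleR_conv_of_real flip: of_real_mult)
  finally show ?thesis using True by simp
next
  case False
  define k where "k = 2 * real_of_int (m' - m) * pi / T"
  have k0: "k \<noteq> 0" using False T pi_gt_zero by (simp add: k_def)
  define F where "F t = (1 / T) * exp (\<i> * of_real (k * t)) / (\<i> * of_real k)" for t
  have dF: "(F has_vector_derivative (1 / T) * exp (\<i> * of_real (k * t))) (at t within {0..T})" for t
  proof -
    have d1: "((\<lambda>t. \<i> * of_real (k * t)) has_vector_derivative \<i> * of_real k) (at t within {0..T})"
      by (auto intro!: derivative_eq_intros)
    have "((exp \<circ> (\<lambda>t. \<i> * of_real (k * t))) has_vector_derivative (\<i> * of_real k) * exp (\<i> * of_real (k * t))) (at t within {0..T})"
      by (rule field_vector_diff_chain_within[OF d1]) (rule DERIV_exp[THEN has_field_derivative_at_within])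
    then have "((\<lambda>t. exp (\<i> * of_real (k * t))) has_vector_derivative exp (\<i> * of_real (k * t)) * (\<i> * of_real k)) (at t within {0..T})"
      by (simp add: o_def mult.commute)
    then show ?thesis unfolding F_def using k0
      by (auto intro!: derivative_eq_intros simp: field_simps)
  qed
  have eq: "(\<lambda>t. tfun T m' t * cnj (tfun T m t)) = (\<lambda>t. (1 / T) * exp (\<i> * of_real (k * t)))"
    using T by (auto simp: tfun_prod k_def mult.commute mult.left_commute)
  have "((\<lambda>t. (1 / T) * exp (\<i> * of_real (k * t))) has_integral F T - F 0) {0..T}"
    using T by (intro fundamental_theorem_of_calculus dF) auto
  moreover have "F T = F 0"
  proof -
    have "\<i> * of_real (k * T) = (2 * of_int (m' - m) * pi) * \<i>" using T by (simp add: k_def field_simps)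
    then have "exp (\<i> * of_real (k * T)) = exp ((2 * of_int (m' - m) * pi) * \<i>)" by (rule arg_cong[where f=exp])
    also have "\<dots> = 1" by (rule exp_integer_2pi) simp
    finally have "exp (\<i> * of_real (k * T)) = 1" .
    then show ?thesis by (simp add: F_def)
  qed
  ultimately have "((\<lambda>t. (1 / T) * exp (\<i> * of_real (k * t))) has_integral 0) {0..T}" by simp
  then have "integral {0..T} (\<lambda>t. tfun T m' t * cnj (tfun T m t)) = 0" unfolding eq by (rule integral_unique)
  then show ?thesis using False by simp
qed

lemma set_integral_sum':
  fixes f :: "'i \<Rightarrow> 'a \<Rightarrow> 'b::{banach, second_countable_topology}"
  assumes "finite I" "\<And>i. i \<in> I \<Longrightarrow> set_integrable M A (f i)"
  shows "set_integrable M A (\<lambda>x. \<Sum>i\<in>I. f i x) \<and> (LINT x:A|M. (\<Sum>i\<in>I. f i x)) = (\<Sum>i\<in>I. LINT x:A|M. f i x)"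
  using assms
proof (induction I rule: finite_induct)
  case empty
  show ?case by (simp add: set_integrable_def set_lebesgue_integral_def)
next
  case (insert i I)
  then have fi: "set_integrable M A (f i)" and IH: "set_integrable M A (\<lambda>x. \<Sum>i\<in>I. f i x)"
    "(LINT x:A|M. (\<Sum>i\<in>I. f i x)) = (\<Sum>i\<in>I. LINT x:A|M. f i x)" by auto
  show ?case using insert(1,2) fi IH set_integral_add[OF fi IH(1)] by simp
qed

lemma set_integrable_cnj:
  "set_integrable M A f \<Longrightarrow> set_integrable M A (\<lambda>x. cnj (f x))"
  unfolding set_integrable_def by (drule integrable_cnj) (simp add: scaleR_conv_of_real)

lemma set_integral_cnj:
  "(LINT x:A|M. cnj (f x)) = cnj (LINT x:A|M. f x)"
proof -
  have e: "(\<lambda>x. indicator A x *\<^sub>R cnj (f x)) = (\<lambda>x. cnj (indicator A x *\<^sub>R f x))"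
    by (simp add: scaleR_conv_of_real)
  show ?thesis unfolding set_lebesgue_integral_def e by (rule Bochner_Integration.integral_cnj)
qed

context slp begin

definition Bf :: "real \<Rightarrow> nat \<Rightarrow> int \<Rightarrow> real \<times> real \<Rightarrow> complex" where
  "Bf T n m z = complex_of_real (sl_efun r n (snd z)) * cnj (tfun T m (fst z)) * complex_of_real (r (snd z))"

lemma efun_cont: "n \<ge> 1 \<Longrightarrow> continuous_on {0..pi} (sl_efun r n)"
  using eigenfun_cont efun_props by blast

lemma cont_fst: "continuous_on {0..(T::real)} f \<Longrightarrow> continuous_on (cbox (0,0) (T,pi)) (\<lambda>z. f (fst z))"
  by (rule continuous_on_compose2[OF _ continuous_on_fst]) (auto simp: cbox_Pair_eq box_real)

lemma cont_snd: "continuous_on {0..pi} g \<Longrightarrow> continuous_on (cbox (0,0) (T,pi)) (\<lambda>z. g (snd z))"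
  by (rule continuous_on_compose2[OF _ continuous_on_snd]) (auto simp: cbox_Pair_eq)

lemma Bf_cont: "n \<ge> 1 \<Longrightarrow> continuous_on (cbox (0,0) (T,pi)) (Bf T n m)"
  unfolding Bf_def
  by (intro continuous_intros cont_snd efun_cont r_cont cont_fst[OF tfun_cont])

lemma basis_cont: "n \<ge> 1 \<Longrightarrow> continuous_on (cbox (0,0) (T,pi)) (basis r T n m)"
  unfolding basis_def[abs_def]
  by (intro continuous_intros cont_snd efun_cont cont_fst[OF tfun_cont])

lemma coef_Bf: "coef r T u n m = (LINT z:Omega T|lebesgue. u z * Bf T n m z)"
  unfolding coef_def Bf_def by (simp add: mult.assoc)

lemma basis_orth:
  assumes T: "T > 0" and n: "n \<ge> 1" "n' \<ge> 1"
  shows "coef r T (basis r T n' m') n m = (if n' = n \<and> m' = m then 1 else 0)"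
proof -
  define f where "f t = tfun T m' t * cnj (tfun T m t)" for t
  define g where "g x = complex_of_real (sl_efun r n' x * sl_efun r n x * r x)" for x
  have eq: "basis r T n' m' z * Bf T n m z = f (fst z) * g (snd z)" for z
    unfolding basis_def Bf_def f_def g_def by (simp add: mult_ac)
  have fc: "continuous_on {0..T} f" unfolding f_def by (intro continuous_intros tfun_cont)
  have gc: "continuous_on {0..pi} g" unfolding g_def using efun_cont[OF n(1)] efun_cont[OF n(2)]
    by (intro continuous_intros r_cont)
  have c: "continuous_on (cbox (0,0) (T,pi)) (\<lambda>z. f (fst z) * g (snd z))"
    using cont_fst[OF fc] cont_snd[OF gc] by (intro continuous_intros)
  have "coef r T (basis r T n' m') n m = (LINT z:Omega T|lebesgue. f (fst z) * g (snd z))"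
    unfolding coef_Bf eq ..
  also have "\<dots> = integral (cbox (0,0) (T,pi)) (\<lambda>z. f (fst z) * g (snd z))" by (rule cont_int(2)[OF c])
  also have "\<dots> = integral {0..T} f * integral {0..pi} g" by (rule prod_int[OF fc gc])
  also have "integral {0..T} f = (if m' = m then 1 else 0)" unfolding f_def by (rule tfun_orth[OF T])
  also have "integral {0..pi} g = (if n' = n then 1 else 0)"
  proof (cases "n' = n")
    case True
    have cc: "continuous_on {0..pi} (\<lambda>x. r x * (sl_efun r n x)\<^sup>2)"
      by (intro continuous_intros r_cont efun_cont n)
    have "((\<lambda>x. r x * (sl_efun r n x)\<^sup>2) has_integral integral {0..pi} (\<lambda>x. r x * (sl_efun r n x)\<^sup>2)) {0..pi}"
      by (rule integrable_integral[OF integrable_continuous_interval[OF cc]])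
    then have "((\<lambda>x. r x * (sl_efun r n x)\<^sup>2) has_integral 1) {0..pi}"
      using efun_props(2)[OF n(1)] by simp
    then have hi1: "((\<lambda>x. sl_efun r n x * sl_efun r n x * r x) has_integral 1) {0..pi}"
      by (simp add: power2_eq_square mult.commute mult.left_commute)
    have "(g has_integral (of_real 1)) {0..pi}" unfolding g_def True by (rule has_integral_of_real[OF hi1])
    then show ?thesis using True by (simp add: integral_unique)
  next
    case False
    have "sl_eig r n' \<noteq> sl_eig r n" using sl_eig_inj n False by blast
    from eigen_orth[OF efun_props(1)[OF n(2)] efun_props(1)[OF n(1)] this]
    have hi0: "((\<lambda>x. sl_efun r n' x * sl_efun r n x * r x) has_integral 0) {0..pi}"
      by (simp add: mult.commute mult.left_commute)
    have "(g has_integral (of_real 0)) {0..pi}" unfolding g_def by (rule has_integral_of_real[OF hi0])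
    then show ?thesis using False by (simp add: integral_unique)
  qed
  finally show ?thesis by auto
qed

end

context slp begin

lemma u_int:
  assumes u: "u \<in> L2w r T" and B: "continuous_on (cbox (0,0) (T,pi)) B"
  shows "set_integrable lebesgue (Omega T) (\<lambda>z. u z * B z)"
proof -
  have mu: "(\<lambda>z. indicator (Omega T) z *\<^sub>R u z) \<in> borel_measurable lebesgue"
    and iu: "set_integrable lebesgue (Omega T) (\<lambda>z. (cmod (u z))\<^sup>2 * r (snd z))"
    using u unfolding L2w_def by auto
  have "bounded (B ` cbox (0,0) (T,pi))"
    by (intro compact_imp_bounded compact_continuous_image B compact_cbox)
  then obtain C where C: "C > 0" "\<And>z. z \<in> cbox (0,0) (T,pi) \<Longrightarrow> norm (B z) \<le> C"
    unfolding bounded_pos by auto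
  have c1: "set_integrable lebesgue (Omega T) (\<lambda>z. 1::real)"
    by (rule set_integrable_subset[OF absolutely_integrable_continuous[OF continuous_on_const] Omega_sets Omega_sub])
  define f where "f z = C * (1 + K * ((cmod (u z))\<^sup>2 * r (snd z)))" for z
  have fi: "set_integrable lebesgue (Omega T) f"
    unfolding f_def by (intro set_integrable_mult_right set_integral_add(1) c1 iu)
  have mB: "(\<lambda>z. indicator (Omega T) z *\<^sub>R B z) \<in> borel_measurable lebesgue" by (rule meas_cont[OF B])
  have e: "(\<lambda>z. indicator (Omega T) z *\<^sub>R (u z * B z)) = (\<lambda>z. (indicator (Omega T) z *\<^sub>R u z) * (indicator (Omega T) z *\<^sub>R B z))"
    by (auto simp: indicator_def)
  have gm: "set_borel_measurable lebesgue (Omega T) (\<lambda>z. u z * B z)"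
    unfolding set_borel_measurable_def e using mu mB by (rule borel_measurable_times)
  show ?thesis
  proof (rule set_integrable_bound[OF fi gm AE_I2], intro impI)
    fix z assume z: "z \<in> Omega T"
    then have zb: "z \<in> cbox (0,0) (T,pi)" and zs: "snd z \<in> {0..pi}" using Omega_sub unfolding Omega_def by auto
    have rz: "r (snd z) > 0" "1 / r (snd z) \<le> K" using r_pos[OF zs] K(3)[OF zs] by auto
    then have Kr: "1 \<le> K * r (snd z)" by (simp add: field_simps)
    define x where "x = cmod (u z)"
    have x0: "x \<ge> 0" by (simp add: x_def)
    have "0 \<le> (x - 1/2)\<^sup>2" by simp
    then have "0 \<le> x * x - x + 1/4" by (simp add: power2_eq_square algebra_simps)
    then have x1: "x \<le> 1 + x\<^sup>2" by (simp add: power2_eq_square)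
    have x2: "x\<^sup>2 \<le> K * (x\<^sup>2 * r (snd z))"
      using mult_left_mono[OF Kr, of "x\<^sup>2"] by (simp add: algebra_simps)
    have "norm (u z * B z) = x * norm (B z)" by (simp add: norm_mult x_def)
    also have "\<dots> \<le> x * C" using C(2)[OF zb] x0 by (intro mult_left_mono) auto
    also have "\<dots> \<le> (1 + K * (x\<^sup>2 * r (snd z))) * C" using x1 x2 C(1) by (intro mult_right_mono) auto
    also have "\<dots> = f z" by (simp add: f_def x_def mult.commute)
    also have "\<dots> \<le> norm (f z)" by simp
    finally show "norm (u z * B z) \<le> norm (f z)" .
  qed
qed

lemma coef_comb:
  assumes T: "T > 0" and F: "finite F" "F \<subseteq> Idx" and nm: "(n, m) \<in> Idx"
  shows "set_integrable lebesgue (Omega T) (\<lambda>z. (\<Sum>k\<in>F. c k * basis r T (fst k) (snd k) z) * Bf T n m z)"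
    and "coef r T (\<lambda>z. \<Sum>k\<in>F. c k * basis r T (fst k) (snd k) z) n m = (if (n, m) \<in> F then c (n, m) else 0)"
proof -
  have n1: "n \<ge> 1" using nm by (auto simp: Idx_def)
  have k1: "fst k \<ge> 1" if "k \<in> F" for k using F(2) that by (auto simp: Idx_def)
  have ik: "set_integrable lebesgue (Omega T) (\<lambda>z. c k * (basis r T (fst k) (snd k) z * Bf T n m z))" if "k \<in> F" for k
    using k1[OF that] n1 by (intro set_integrable_mult_right cont_int(1) continuous_intros basis_cont Bf_cont)
  have e: "(\<lambda>z. (\<Sum>k\<in>F. c k * basis r T (fst k) (snd k) z) * Bf T n m z) = (\<lambda>z. \<Sum>k\<in>F. c k * (basis r T (fst k) (snd k) z * Bf T n m z))"
    by (simp add: sum_distrib_right mult.assoc)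
  note S = set_integral_sum'[where f="\<lambda>k z. c k * (basis r T (fst k) (snd k) z * Bf T n m z)", OF F(1) ik]
  show "set_integrable lebesgue (Omega T) (\<lambda>z. (\<Sum>k\<in>F. c k * basis r T (fst k) (snd k) z) * Bf T n m z)"
    unfolding e using S by blast
  have "coef r T (\<lambda>z. \<Sum>k\<in>F. c k * basis r T (fst k) (snd k) z) n m = (\<Sum>k\<in>F. c k * coef r T (basis r T (fst k) (snd k)) n m)"
    unfolding coef_Bf e using S by simp
  also have "\<dots> = (\<Sum>k\<in>F. if k = (n, m) then c k else 0)"
    by (rule sum.cong[OF refl]) (auto simp: basis_orth[OF T n1 k1])
  also have "\<dots> = (if (n, m) \<in> F then c (n, m) else 0)" using F(1) by (simp add: sum.delta')
  finally show "coef r T (\<lambda>z. \<Sum>k\<in>F. c k * basis r T (fst k) (snd k) z) n m = (if (n, m) \<in> F then c (n, m) else 0)" .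
qed

lemma coef_diff:
  assumes "set_integrable lebesgue (Omega T) (\<lambda>z. u z * Bf T n m z)" "set_integrable lebesgue (Omega T) (\<lambda>z. v z * Bf T n m z)"
  shows "coef r T (\<lambda>z. u z - v z) n m = coef r T u n m - coef r T v n m"
    "coef r T (\<lambda>z. u z + v z) n m = coef r T u n m + coef r T v n m"
  unfolding coef_Bf using set_integral_diff(2)[OF assms] set_integral_add(2)[OF assms]
  by (simp_all add: algebra_simps)

end

lemma cmod_diff_sq: "(cmod (a - b))\<^sup>2 = (cmod a)\<^sup>2 - 2 * Re (a * cnj b) + (cmod b)\<^sup>2"
  unfolding cmod_power2 by (simp add: power2_eq_square algebra_simps)

lemma set_integral_Re:
  assumes "set_integrable M A f"
  shows "(LINT x:A|M. Re (f x)) = Re (LINT x:A|M. f x)"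
proof -
  have "integrable M (\<lambda>x. indicator A x *\<^sub>R f x)" using assms by (simp add: set_integrable_def)
  from integral_bounded_linear[OF bounded_linear_Re this]
  show ?thesis unfolding set_lebesgue_integral_def by simp
qed

lemma set_integrable_Re:
  "set_integrable M A f \<Longrightarrow> set_integrable M A (\<lambda>x. Re (f x))"
  unfolding set_integrable_def by (drule integrable_Re) simp

context slp begin

lemma cnj_basis: "cnj (basis r T n m z) * complex_of_real (r (snd z)) = Bf T n m z"
  unfolding basis_def Bf_def by (simp add: mult_ac)

lemma bessel:
  assumes T: "T > 0" and u: "u \<in> L2w r T" and F: "finite F" "F \<subseteq> Idx"
  shows "(\<Sum>k\<in>F. (cmod (coef r T u (fst k) (snd k)))\<^sup>2) \<le> (LINT z:Omega T|lebesgue. (cmod (u z))\<^sup>2 * r (snd z))"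
proof -
  define c where "c k = coef r T u (fst k) (snd k)" for k
  define s where "s z = (\<Sum>k\<in>F. c k * basis r T (fst k) (snd k) z)" for z
  define Bs where "Bs z = cnj (s z) * complex_of_real (r (snd z))" for z
  define S where "S = (\<Sum>k\<in>F. (cmod (c k))\<^sup>2)"
  have k1: "fst k \<ge> 1" if "k \<in> F" for k using F(2) that by (auto simp: Idx_def)
  have kI: "(fst k, snd k) \<in> Idx" if "k \<in> F" for k using F(2) that by auto
  have Bs_eq: "Bs z = (\<Sum>k\<in>F. cnj (c k) * Bf T (fst k) (snd k) z)" for z
    unfolding Bs_def s_def by (simp add: sum_distrib_right mult.assoc cnj_basis[symmetric])
  have sc: "continuous_on (cbox (0,0) (T,pi)) s"
    unfolding s_def using k1 by (intro continuous_intros basis_cont) auto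
  have Bsc: "continuous_on (cbox (0,0) (T,pi)) Bs"
    unfolding Bs_def by (intro continuous_intros sc cont_snd r_cont)
  have iuB: "set_integrable lebesgue (Omega T) (\<lambda>z. u z * Bf T (fst k) (snd k) z)" if "k \<in> F" for k
    by (rule u_int[OF u Bf_cont[OF k1[OF that]]])
  have isB: "set_integrable lebesgue (Omega T) (\<lambda>z. s z * Bf T (fst k) (snd k) z)" if "k \<in> F" for k
    unfolding s_def by (rule coef_comb(1)[OF T F kI[OF that]])
  have csk: "coef r T s (fst k) (snd k) = c k" if "k \<in> F" for k
    unfolding s_def using coef_comb(2)[OF T F kI[OF that], of c] that by simp
  have ccnj: "cnj (c k) * c k = complex_of_real ((cmod (c k))\<^sup>2)" for k
    by (metis complex_norm_square mult.commute)
  have A1: "(LINT z:Omega T|lebesgue. u z * Bs z) = complex_of_real S"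
  proof -
    have "(LINT z:Omega T|lebesgue. u z * Bs z) = (LINT z:Omega T|lebesgue. (\<Sum>k\<in>F. cnj (c k) * (u z * Bf T (fst k) (snd k) z)))"
      unfolding Bs_eq by (simp add: sum_distrib_left mult_ac)
    also have "\<dots> = (\<Sum>k\<in>F. cnj (c k) * coef r T u (fst k) (snd k))"
      using set_integral_sum'[where f="\<lambda>k z. cnj (c k) * (u z * Bf T (fst k) (snd k) z)", OF F(1)] iuB
      by (simp add: coef_Bf)
    also have "\<dots> = complex_of_real S" unfolding S_def c_def[symmetric] by (simp add: ccnj)
    finally show ?thesis .
  qed
  have A2: "(LINT z:Omega T|lebesgue. s z * Bs z) = complex_of_real S"
  proof -
    have "(LINT z:Omega T|lebesgue. s z * Bs z) = (LINT z:Omega T|lebesgue. (\<Sum>k\<in>F. cnj (c k) * (s z * Bf T (fst k) (snd k) z)))"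
      unfolding Bs_eq by (simp add: sum_distrib_left mult_ac)
    also have "\<dots> = (\<Sum>k\<in>F. cnj (c k) * coef r T s (fst k) (snd k))"
      using set_integral_sum'[where f="\<lambda>k z. cnj (c k) * (s z * Bf T (fst k) (snd k) z)", OF F(1)] isB
      by (simp add: coef_Bf)
    also have "\<dots> = complex_of_real S" unfolding S_def using csk by (simp add: ccnj)
    finally show ?thesis .
  qed
  have iu: "set_integrable lebesgue (Omega T) (\<lambda>z. (cmod (u z))\<^sup>2 * r (snd z))" using u unfolding L2w_def by auto
  have i1: "set_integrable lebesgue (Omega T) (\<lambda>z. u z * Bs z)" by (rule u_int[OF u Bsc])
  have i2: "set_integrable lebesgue (Omega T) (\<lambda>z. s z * Bs z)" by (rule cont_int(1)) (intro continuous_intros sc Bsc)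
  have pt: "(cmod (u z - s z))\<^sup>2 * r (snd z) = (cmod (u z))\<^sup>2 * r (snd z) - 2 * Re (u z * Bs z) + Re (s z * Bs z)" for z
  proof -
    have "Re (u z * Bs z) = Re (u z * cnj (s z)) * r (snd z)" unfolding Bs_def by (simp add: mult.assoc[symmetric])
    moreover have "Re (s z * Bs z) = (cmod (s z))\<^sup>2 * r (snd z)"
      unfolding Bs_def by (simp add: mult.assoc[symmetric] complex_norm_square[symmetric])
    ultimately show ?thesis by (simp add: cmod_diff_sq algebra_simps)
  qed
  have i1r: "set_integrable lebesgue (Omega T) (\<lambda>z. 2 * Re (u z * Bs z))" by (intro set_integrable_mult_right set_integrable_Re i1)
  have i2r: "set_integrable lebesgue (Omega T) (\<lambda>z. Re (s z * Bs z))" by (intro set_integrable_Re i2)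
  have "0 \<le> (LINT z:Omega T|lebesgue. (cmod (u z - s z))\<^sup>2 * r (snd z))"
  proof -
    have "0 \<le> integral\<^sup>L lebesgue (\<lambda>z. indicator (Omega T) z *\<^sub>R ((cmod (u z - s z))\<^sup>2 * r (snd z)))"
    proof (rule Bochner_Integration.integral_nonneg)
      fix z
      show "0 \<le> indicator (Omega T) z *\<^sub>R ((cmod (u z - s z))\<^sup>2 * r (snd z))"
      proof (cases "z \<in> Omega T")
        case True
        then have "snd z \<in> {0..pi}" unfolding Omega_def by auto
        then have "r (snd z) > 0" by (rule r_pos)
        then show ?thesis using True by simp
      qed simp
    qed
    then show ?thesis by (simp add: set_lebesgue_integral_def)
  qed
  also have "(LINT z:Omega T|lebesgue. (cmod (u z - s z))\<^sup>2 * r (snd z)) =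
      (LINT z:Omega T|lebesgue. (cmod (u z))\<^sup>2 * r (snd z)) - (LINT z:Omega T|lebesgue. 2 * Re (u z * Bs z))
        + (LINT z:Omega T|lebesgue. Re (s z * Bs z))"
    unfolding pt using set_integral_diff(2)[OF iu i1r] set_integral_add(2)[OF set_integral_diff(1)[OF iu i1r] i2r] by simp
  also have "(LINT z:Omega T|lebesgue. 2 * Re (u z * Bs z)) = 2 * (LINT z:Omega T|lebesgue. Re (u z * Bs z))"
    by (rule set_integral_mult_right)
  also have "(LINT z:Omega T|lebesgue. Re (u z * Bs z)) = S"
    by (simp only: set_integral_Re[OF i1] A1 Re_complex_of_real)
  also have "(LINT z:Omega T|lebesgue. Re (s z * Bs z)) = S"
    by (simp only: set_integral_Re[OF i2] A2 Re_complex_of_real)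
  finally show ?thesis unfolding S_def c_def by simp
qed

end

lemma le_infsum_single:
  fixes g :: "'a \<Rightarrow> real"
  assumes "g summable_on A" "\<And>x. x \<in> A \<Longrightarrow> g x \<ge> 0" "j \<in> A"
  shows "g j \<le> infsum g A"
proof -
  have "infsum g {j} \<le> infsum g A"
    by (rule infsum_mono_neutral[OF summable_on_finite[of "{j}"] assms(1)]) (use assms in auto)
  then show ?thesis by simp
qed

lemma summable_on_modify_finite:
  fixes f g :: "'a \<Rightarrow> real"
  assumes "f summable_on A" "finite F" "\<And>x. x \<in> A - F \<Longrightarrow> g x = f x"
  shows "g summable_on A"
proof -
  have "g summable_on (A - F)"
    using summable_on_subset_banach[OF assms(1), of "A - F"] summable_on_cong[of "A - F" g f] assms(3) by auto
  moreover have "g summable_on (A \<inter> F)" using assms(2) by simp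
  ultimately have "g summable_on ((A - F) \<union> (A \<inter> F))" by (rule summable_on_Un_disjoint) auto
  moreover have "(A - F) \<union> (A \<inter> F) = A" by auto
  ultimately show ?thesis by simp
qed

context slp begin

lemma lam_spec: "(n, m) \<in> Idx \<Longrightarrow> lam r T n m \<in> specL r T"
  unfolding specL_def Idx_def by auto

lemma coef_summable:
  assumes T: "T > 0" and u: "u \<in> L2w r T"
  shows "(\<lambda>(n, m). (cmod (coef r T u n m))\<^sup>2) summable_on Idx"
proof (rule nonneg_bdd_above_summable_on)
  show "bdd_above (sum (\<lambda>(n, m). (cmod (coef r T u n m))\<^sup>2) ` {F. F \<subseteq> Idx \<and> finite F})"
  proof (rule bdd_aboveI2)
    fix F assume "F \<in> {F. F \<subseteq> Idx \<and> finite F}"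
    then have F: "finite F" "F \<subseteq> Idx" by auto
    have "sum (\<lambda>(n, m). (cmod (coef r T u n m))\<^sup>2) F = (\<Sum>k\<in>F. (cmod (coef r T u (fst k) (snd k)))\<^sup>2)"
      by (simp add: case_prod_beta)
    also have "\<dots> \<le> (LINT z:Omega T|lebesgue. (cmod (u z))\<^sup>2 * r (snd z))" by (rule bessel[OF T u F])
    finally show "sum (\<lambda>(n, m). (cmod (coef r T u n m))\<^sup>2) F \<le> (LINT z:Omega T|lebesgue. (cmod (u z))\<^sup>2 * r (snd z))" .
  qed
qed auto

lemma espan_zero:
  assumes T: "T > 0" and a: "a \<notin> specL r T" and u: "u \<in> Espan r T a S" and S: "S \<subseteq> Idx"
    and j: "(n0, m0) \<in> Idx" "(n0, m0) \<notin> S"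
  shows "coef r T u n0 m0 = 0"
proof (rule ccontr)
  assume nz: "coef r T u n0 m0 \<noteq> 0"
  define f where "f = (\<lambda>(n, m). \<bar>lam r T n m - a\<bar> * (cmod (coef r T u n m))\<^sup>2)"
  have uE: "u \<in> Espace r T a" and uL: "u \<in> L2w r T" and fs: "f summable_on Idx"
    using u unfolding Espan_def Espace_def f_def by auto
  have la: "lam r T n0 m0 \<noteq> a" using lam_spec[OF j(1)] a by auto
  define eps where "eps = f (n0, m0)"
  have eps: "eps > 0" using la nz by (simp add: eps_def f_def)
  obtain F c where F: "finite F" "F \<subseteq> S"
    and small: "Enorm2 r T a (\<lambda>z. u z - (\<Sum>k\<in>F. c k * basis r T (fst k) (snd k) z)) < eps"
    using u eps unfolding Espan_def by blast
  define s where "s z = (\<Sum>k\<in>F. c k * basis r T (fst k) (snd k) z)" for z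
  have FI: "F \<subseteq> Idx" using F S by auto
  define g where "g = (\<lambda>(n, m). \<bar>lam r T n m - a\<bar> * (cmod (coef r T (\<lambda>z. u z - s z) n m))\<^sup>2)"
  have cd: "coef r T (\<lambda>z. u z - s z) n m = coef r T u n m - (if (n, m) \<in> F then c (n, m) else 0)"
    if nm: "(n, m) \<in> Idx" for n m
  proof -
    have n1: "n \<ge> 1" using nm by (auto simp: Idx_def)
    have i1: "set_integrable lebesgue (Omega T) (\<lambda>z. u z * Bf T n m z)" by (rule u_int[OF uL Bf_cont[OF n1]])
    have i2: "set_integrable lebesgue (Omega T) (\<lambda>z. s z * Bf T n m z)" unfolding s_def by (rule coef_comb(1)[OF T F(1) FI nm])
    show ?thesis using coef_diff(1)[OF i1 i2] coef_comb(2)[OF T F(1) FI nm, of c] by (simp add: s_def)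
  qed
  have gf: "g x = f x" if "x \<in> Idx - F" for x
    using that cd by (auto simp: g_def f_def split: prod.splits)
  have gs: "g summable_on Idx" by (rule summable_on_modify_finite[OF fs F(1) gf])
  have "g (n0, m0) \<le> infsum g Idx"
    by (rule le_infsum_single[OF gs _ j(1)]) (auto simp: g_def)
  also have "infsum g Idx = Enorm2 r T a (\<lambda>z. u z - s z)" unfolding Enorm2_def g_def ..
  also have "\<dots> < eps" using small by (simp add: s_def)
  also have "(n0, m0) \<notin> F" using j F by auto
  then have "eps = g (n0, m0)" unfolding eps_def using gf[of "(n0, m0)"] j by auto
  finally show False by simp
qed

end
lemma P1:
  fixes a b l :: real
  assumes a: "a > 0" and b: "b > 0" and l: "l < a \<or> (a < l \<and> l < b)"
  shows "l - a - b \<le> - min 1 (a / b) * \<bar>l - a\<bar>"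
proof -
  define g where "g = min 1 (a / b)"
  have g1: "g \<le> 1" and g2: "g \<le> a / b" and g0: "g \<ge> 0" using a b by (auto simp: g_def)
  show ?thesis
  proof (cases "l < a")
    case True
    have h: "g * (a - l) \<le> 1 * (a - l)" using True g1 by (intro mult_right_mono) auto
    have e: "- g * \<bar>l - a\<bar> = - (g * (a - l))" using True by simp
    have h': "g * (a - l) \<le> a - l" using h by simp
    have "l - a - b \<le> - (g * (a - l))" using h' b by linarith
    then show ?thesis unfolding g_def[symmetric] e .
  next
    case False
    then have la: "a < l" "l < b" using l by auto
    have "(1 + g) * (l - a) \<le> (1 + a / b) * (l - a)" using la g2 by (intro mult_right_mono) auto
    also have "\<dots> \<le> (1 + a / b) * (b - a)" using la a b by (intro mult_left_mono) auto
    also have "\<dots> = b - a * a / b" using b by (simp add: field_simps)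
    also have "\<dots> \<le> b" using a b by simp
    finally have "(1 + g) * (l - a) \<le> b" .
    moreover have e: "- g * \<bar>l - a\<bar> = - (g * (l - a))" using la by simp
    ultimately show ?thesis unfolding g_def[symmetric] e by (simp add: algebra_simps)
  qed
qed

lemma P2:
  fixes a b l bp :: real
  assumes a: "a > 0" and b: "b > 0" and ab: "a < bp - b" and l: "bp \<le> l"
  shows "(bp - a - b) / (bp - a) * \<bar>l - a\<bar> \<le> l - a - b" "0 \<le> l - a - b" "l - a - b \<le> \<bar>l - a\<bar>"
proof -
  have d: "bp - a > 0" using ab b by linarith
  have la: "\<bar>l - a\<bar> = l - a" using ab b l by auto
  have "(bp - a - b) * (l - a) \<le> (l - a - b) * (bp - a)"
  proof -
    have "b * (bp - a) \<le> b * (l - a)" using b l by (intro mult_left_mono) auto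
    then show ?thesis by (simp add: algebra_simps)
  qed
  then show "(bp - a - b) / (bp - a) * \<bar>l - a\<bar> \<le> l - a - b"
    unfolding la using d by (simp add: divide_le_eq mult.commute)
  show "0 \<le> l - a - b" using ab l by linarith
  show "l - a - b \<le> \<bar>l - a\<bar>" using la b by linarith
qed

lemma sq_sum_le: "(cmod (x + y))\<^sup>2 \<le> 2 * (cmod x)\<^sup>2 + 2 * (cmod y)\<^sup>2"
proof -
  have "cmod (x + y) \<le> cmod x + cmod y" by (rule norm_triangle_ineq)
  then have "(cmod (x + y))\<^sup>2 \<le> (cmod x + cmod y)\<^sup>2" by (intro power_mono) auto
  also have "\<dots> \<le> 2 * (cmod x)\<^sup>2 + 2 * (cmod y)\<^sup>2"
    using sum_squares_bound[of "cmod x" "cmod y"] by (simp add: power2_sum)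
  finally show ?thesis .
qed

theorem lemma4p1:
  fixes p q :: nat and rho rho' rho'' :: "real \<Rightarrow> real" and a b :: real
  defines "T \<equiv> Tper p q"
  assumes pq: "p > 0" "q > 0" "coprime p q"
    and rho_pos: "\<forall>x\<in>{0..pi}. rho x > 0"
    and rho_d1: "\<forall>x\<in>{0..pi}. (rho has_real_derivative rho' x) (at x within {0..pi})"
    and rho_d1_cont: "continuous_on {0..pi} rho'"
    and rho_d2_meas: "set_borel_measurable lebesgue {0..pi} rho''"
    and rho_d2_L2: "set_integrable lebesgue {0..pi} (\<lambda>x. (rho'' x)\<^sup>2)"
    and rho_d2: "\<forall>x\<in>{0..pi}. rho' x = rho' 0 + set_lebesgue_integral lebesgue {0..x} rho''"
    and rho0_pos: "\<exists>c>0. AE x in lebesgue. x \<in> {0<..<pi} \<longrightarrow> eta rho rho' rho'' x \<ge> c"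
    and ab_pos: "a > 0" "b > 0"
    and ab_notin: "a \<notin> specL rho T" "b \<notin> specL rho T"
    and a_lower: "2 / pi * set_lebesgue_integral lebesgue {0..pi} (eta rho rho' rho'') < a"
    and a_upper: "a < bplus rho T b - b"
    and ab_meet: "{a<..<b} \<inter> specL rho T \<noteq> {}"
  shows "\<exists>\<gamma>1>0. \<exists>\<gamma>2>0.
           (\<forall>u\<in>Esum (E1 rho T a) (E2 rho T a b). Lform rho T a b u \<le> - \<gamma>1 * Enorm2 rho T a u) \<and>
           (\<forall>u\<in>E3 rho T a b. Lform rho T a b u \<ge> \<gamma>2 * Enorm2 rho T a u)"
proof -
  have Tpos: "T > 0" unfolding T_def Tper_def using pq by simp
  have rc: "continuous_on {0..pi} rho"
    using rho_d1 by (meson DERIV_continuous continuous_on_eq_continuous_within)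
  interpret slp rho using rc rho_pos by unfold_locales auto
  define bp where "bp = bplus rho T b"
  define g1 where "g1 = min 1 (a / b)"
  define g2 where "g2 = (bp - a - b) / (bp - a)"
  have g1p: "g1 > 0" using ab_pos by (simp add: g1_def)
  have abp: "a < bp - b" using a_upper by (simp add: bp_def)
  have g2p: "g2 > 0" unfolding g2_def using abp ab_pos by (intro divide_pos_pos) auto
  have bpl: "bp \<le> lam rho T n m" if nm: "(n, m) \<in> Idx" "lam rho T n m > b" for n m
    unfolding bp_def bplus_def
    by (rule cInf_lower) (use lam_spec[OF nm(1)] nm(2) in \<open>auto intro: bdd_belowI[of _ b]\<close>)
  have part1: "Lform rho T a b u \<le> - g1 * Enorm2 rho T a u" if u0: "u \<in> Esum (E1 rho T a) (E2 rho T a b)" for u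
  proof -
    obtain v w where u: "u = (\<lambda>z. v z + w z)" and v: "v \<in> E1 rho T a" and w: "w \<in> E2 rho T a b"
      using u0 unfolding Esum_def by blast
    have vE: "v \<in> Espace rho T a" and wE: "w \<in> Espace rho T a" using v w unfolding E1_def E2_def Espan_def by auto
    have vL: "v \<in> L2w rho T" and wL: "w \<in> L2w rho T" using vE wE unfolding Espace_def by auto
    have cu: "coef rho T u n m = coef rho T v n m + coef rho T w n m" if nm: "(n, m) \<in> Idx" for n m
    proof -
      have n1: "n \<ge> 1" using nm by (auto simp: Idx_def)
      show ?thesis unfolding u by (rule coef_diff(2)[OF u_int[OF vL Bf_cont[OF n1]] u_int[OF wL Bf_cont[OF n1]]])
    qed
    have z: "coef rho T u n m = 0" if nm: "(n, m) \<in> Idx" and nS: "\<not> (lam rho T n m < a \<or> (a < lam rho T n m \<and> lam rho T n m < b))" for n m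
    proof -
      have "coef rho T v n m = 0"
        by (rule espan_zero[OF Tpos ab_notin(1) v[unfolded E1_def]]) (use nm nS in auto)
      moreover have "coef rho T w n m = 0"
        by (rule espan_zero[OF Tpos ab_notin(1) w[unfolded E2_def]]) (use nm nS in auto)
      ultimately show ?thesis using cu[OF nm] by simp
    qed
    define fE where "fE = (\<lambda>(n, m). \<bar>lam rho T n m - a\<bar> * (cmod (coef rho T u n m))\<^sup>2)"
    define fL where "fL = (\<lambda>(n, m). (lam rho T n m - a - b) * (cmod (coef rho T u n m))\<^sup>2)"
    define fEv where "fEv = (\<lambda>(n, m). \<bar>lam rho T n m - a\<bar> * (cmod (coef rho T v n m))\<^sup>2)"
    define fEw where "fEw = (\<lambda>(n, m). \<bar>lam rho T n m - a\<bar> * (cmod (coef rho T w n m))\<^sup>2)"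
    define cv2 where "cv2 = (\<lambda>(n, m). (cmod (coef rho T v n m))\<^sup>2)"
    define cw2 where "cw2 = (\<lambda>(n, m). (cmod (coef rho T w n m))\<^sup>2)"
    have sv: "fEv summable_on Idx" using vE unfolding Espace_def fEv_def by auto
    have sw: "fEw summable_on Idx" using wE unfolding Espace_def fEw_def by auto
    have scv: "cv2 summable_on Idx" unfolding cv2_def by (rule coef_summable[OF Tpos vL])
    have scw: "cw2 summable_on Idx" unfolding cw2_def by (rule coef_summable[OF Tpos wL])
    have bnd1: "fE x \<le> 2 * fEv x + 2 * fEw x" and bnd2: "norm (fL x) \<le> fE x + b * (2 * cv2 x + 2 * cw2 x)"
      and ineq: "fL x \<le> - g1 * fE x" and nnE: "0 \<le> fE x" if x: "x \<in> Idx" for x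
    proof -
      obtain n m where xnm: "x = (n, m)" by (cases x)
      have nm: "(n, m) \<in> Idx" using x xnm by simp
      have sq: "(cmod (coef rho T u n m))\<^sup>2 \<le> 2 * (cmod (coef rho T v n m))\<^sup>2 + 2 * (cmod (coef rho T w n m))\<^sup>2"
        using cu[OF nm] sq_sum_le by simp
      have la0: "\<bar>lam rho T n m - a\<bar> \<ge> 0" by simp
      show "fE x \<le> 2 * fEv x + 2 * fEw x"
        using mult_left_mono[OF sq la0] unfolding xnm fE_def fEv_def fEw_def by (simp add: algebra_simps)
      have "norm (fL x) = \<bar>lam rho T n m - a - b\<bar> * (cmod (coef rho T u n m))\<^sup>2"
        unfolding xnm fL_def by (simp add: abs_mult)
      also have "\<dots> \<le> (\<bar>lam rho T n m - a\<bar> + b) * (cmod (coef rho T u n m))\<^sup>2"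
        using ab_pos by (intro mult_right_mono) auto
      also have "\<dots> = fE x + b * (cmod (coef rho T u n m))\<^sup>2" unfolding xnm fE_def by (simp add: algebra_simps)
      also have "\<dots> \<le> fE x + b * (2 * cv2 x + 2 * cw2 x)"
        using mult_left_mono[OF sq, of b] ab_pos unfolding xnm cv2_def cw2_def by simp
      finally show "norm (fL x) \<le> fE x + b * (2 * cv2 x + 2 * cw2 x)" .
      show "0 \<le> fE x" unfolding xnm fE_def by simp
      show "fL x \<le> - g1 * fE x"
      proof (cases "lam rho T n m < a \<or> (a < lam rho T n m \<and> lam rho T n m < b)")
        case True
        from mult_right_mono[OF P1[OF ab_pos True], of "(cmod (coef rho T u n m))\<^sup>2"]
        show ?thesis unfolding xnm fL_def fE_def g1_def by (simp add: algebra_simps)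
      next
        case False
        then show ?thesis using z[OF nm False] unfolding xnm fL_def fE_def by simp
      qed
    qed
    have sE: "fE summable_on Idx"
      by (rule summable_on_comparison_test[OF summable_on_add[OF summable_on_cmult_right[OF sv] summable_on_cmult_right[OF sw]]])
        (use bnd1 nnE in auto)
    have sL: "fL summable_on Idx"
    proof (rule abs_summable_summable)
      have "(\<lambda>x. fE x + b * (2 * cv2 x + 2 * cw2 x)) summable_on Idx"
        by (intro summable_on_add summable_on_cmult_right sE scv scw)
      then show "(\<lambda>x. norm (fL x)) summable_on Idx"
        by (rule summable_on_comparison_test) (use bnd2 in auto)
    qed
    have "Lform rho T a b u = infsum fL Idx" unfolding Lform_def fL_def ..
    also have "\<dots> \<le> infsum (\<lambda>x. - g1 * fE x) Idx"
      by (rule infsum_mono[OF sL summable_on_cmult_right[OF sE]]) (rule ineq)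
    also have "\<dots> = - g1 * infsum fE Idx" by (rule infsum_cmult_right')
    also have "infsum fE Idx = Enorm2 rho T a u" unfolding Enorm2_def fE_def ..
    finally show ?thesis .
  qed
  have part2: "Lform rho T a b u \<ge> g2 * Enorm2 rho T a u" if u: "u \<in> E3 rho T a b" for u
  proof -
    have uE: "u \<in> Espace rho T a" using u unfolding E3_def Espan_def by auto
    define fE where "fE = (\<lambda>(n, m). \<bar>lam rho T n m - a\<bar> * (cmod (coef rho T u n m))\<^sup>2)"
    define fL where "fL = (\<lambda>(n, m). (lam rho T n m - a - b) * (cmod (coef rho T u n m))\<^sup>2)"
    have sE: "fE summable_on Idx" using uE unfolding Espace_def fE_def by auto
    have bnd: "0 \<le> fL x \<and> fL x \<le> fE x \<and> g2 * fE x \<le> fL x" if x: "x \<in> Idx" for x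
    proof -
      obtain n m where xnm: "x = (n, m)" by (cases x)
      have nm: "(n, m) \<in> Idx" using x xnm by simp
      show ?thesis
      proof (cases "lam rho T n m > b")
        case True
        note PP = P2[OF ab_pos abp bpl[OF nm True]]
        have c0: "0 \<le> (cmod (coef rho T u n m))\<^sup>2" by simp
        show ?thesis unfolding xnm fL_def fE_def g2_def
          using mult_right_mono[OF PP(1) c0] mult_right_mono[OF PP(2) c0] mult_right_mono[OF PP(3) c0]
          by (simp add: algebra_simps)
      next
        case False
        have "coef rho T u n m = 0"
          by (rule espan_zero[OF Tpos ab_notin(1) u[unfolded E3_def]]) (use nm False in auto)
        then show ?thesis unfolding xnm fL_def fE_def by simp
      qed
    qed
    have sL: "fL summable_on Idx"
      by (rule summable_on_comparison_test[OF sE]) (use bnd in auto)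
    have "g2 * Enorm2 rho T a u = g2 * infsum fE Idx" unfolding Enorm2_def fE_def ..
    also have "\<dots> = infsum (\<lambda>x. g2 * fE x) Idx" by (rule infsum_cmult_right'[symmetric])
    also have "\<dots> \<le> infsum fL Idx"
      by (rule infsum_mono[OF summable_on_cmult_right[OF sE] sL]) (use bnd in auto)
    also have "infsum fL Idx = Lform rho T a b u" unfolding Lform_def fL_def ..
    finally show ?thesis .
  qed
  show ?thesis using g1p g2p part1 part2 by blast
qed

end
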